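(* Consider the nonlinear program: minimize $f(x)$ subject to $\varphi_i(x)\le0$ ($i=1,\dots,s$), $\varphi_i(x)=0$ ($i=s+1,\dots,m$), where $f$ is $\mathcal C^{1,1}$ and each $\varphi_i$ is $\mathcal C^2$-smooth around a local minimizer $\bar x$. If MSCQ holds at $\bar x$, then there is $\bar y\in\mathbb{R}_+^s\times\mathbb{R}^{m-s}$ with $\nabla_xL(\bar x,\bar y)=0$ and $\langle\bar y,g(\bar x)\rangle=0$. If in addition this $\bar y$ is unique (in particular if LICQ holds at $\bar x$), then $$\langle z,w\rangle+\langle w,\nabla^2\langle\bar y,g\rangle(\bar x)w\rangle\ge0\quad\text{for all } w\in S(\bar x,\bar y),\ z\in\breve\partial^2f(\bar x)(w),$$ and if $\bar x$ is a strong local minimizer with modulus $\sigma>0$, then $\langle z,w\rangle+\langle w,\nabla^2\langle\bar y,g\rangle(\bar x)w\rangle\ge\sigma\|w\|^2$ for all such $w,z$.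
   Context: $g:=(\varphi_1,\dots,\varphi_m)$, $\Gamma$ the feasible set, $L(x,y):=f(x)+\langle y,g(x)\rangle$. $I(x):=\{i\le s:\varphi_i(x)=0\}$, $I_+(x,y):=\{i\in I(x):y_i>0\}$, $S(x,y):=\{w:\langle\nabla\varphi_i(x),w\rangle=0\ (i\in\{s+1,\dots,m\}\cup I_+(x,y)),\ \langle\nabla\varphi_i(x),w\rangle\ge0\ (i\in I(x)\setminus I_+(x,y))\}$. MSCQ at $\bar x$: $\operatorname{dist}(x;\Gamma)\le\kappa\big(\sum_{i\le s}\max\{\varphi_i(x),0\}+\sum_{i>s}|\varphi_i(x)|\big)$ for some $\kappa>0$ and all $x$ near $\bar x$. LICQ: $\{\nabla\varphi_i(\bar x):i\in I(\bar x)\cup\{s+1,\dots,m\}\}$ linearly independent. $\breve\partial^2f(\bar x)(w):=\{z:(z,-w)\in\widehat N_{\operatorname{gph}\nabla f}(\bar x,\nabla f(\bar x))\}$ with $\widehat N$ the regular (Fréchet) normal cone. Strong local minimizer with modulus $\sigma$: $f(x)\ge f(\bar x)+\frac\sigma2\|x-\bar x\|^2$ for feasible $x$ near $\bar x$. *)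

theory Defs
  imports "HOL-Analysis.Analysis"
begin

definition grad :: "('a::euclidean_space \<Rightarrow> real) \<Rightarrow> 'a \<Rightarrow> 'a" where
  "grad f x = (\<Sum>b\<in>Basis. frechet_derivative f (at x) b *\<^sub>R b)"

definition hess_quad :: "('a::euclidean_space \<Rightarrow> real) \<Rightarrow> 'a \<Rightarrow> 'a \<Rightarrow> real" where
  "hess_quad \<psi> x w = frechet_derivative (\<lambda>u. frechet_derivative \<psi> (at u) w) (at x) w"

definition C11_near :: "('a::euclidean_space \<Rightarrow> real) \<Rightarrow> 'a \<Rightarrow> bool" where
  "C11_near f xb \<longleftrightarrow> (\<exists>U L. open U \<and> xb \<in> U \<and> (\<forall>x\<in>U. f differentiable (at x))
      \<and> L-lipschitz_on U (grad f))"

definition C2_near :: "('a::euclidean_space \<Rightarrow> real) \<Rightarrow> 'a \<Rightarrow> bool" where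
  "C2_near \<phi> xb \<longleftrightarrow> (\<exists>U (D2 :: 'a \<Rightarrow> ('a \<Rightarrow>\<^sub>L 'a)). open U \<and> xb \<in> U
      \<and> (\<forall>x\<in>U. \<phi> differentiable (at x) \<and> (grad \<phi> has_derivative blinfun_apply (D2 x)) (at x))
      \<and> continuous_on U D2)"

definition feasible_set :: "nat \<Rightarrow> nat \<Rightarrow> (nat \<Rightarrow> 'a \<Rightarrow> real) \<Rightarrow> 'a set" where
  "feasible_set s m \<phi> = {x. (\<forall>i\<in>{1..s}. \<phi> i x \<le> 0) \<and> (\<forall>i\<in>{s+1..m}. \<phi> i x = 0)}"

definition local_minimizer :: "('a::metric_space \<Rightarrow> real) \<Rightarrow> 'a set \<Rightarrow> 'a \<Rightarrow> bool" where
  "local_minimizer f \<Gamma> xb \<longleftrightarrow> xb \<in> \<Gamma> \<and> (\<exists>\<epsilon>>0. \<forall>x\<in>\<Gamma>. dist x xb < \<epsilon> \<longrightarrow> f xb \<le> f x)"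

definition strong_local_minimizer ::
    "('a::real_normed_vector \<Rightarrow> real) \<Rightarrow> 'a set \<Rightarrow> 'a \<Rightarrow> real \<Rightarrow> bool" where
  "strong_local_minimizer f \<Gamma> xb \<sigma> \<longleftrightarrow> xb \<in> \<Gamma> \<and>
     (\<exists>\<epsilon>>0. \<forall>x\<in>\<Gamma>. dist x xb < \<epsilon> \<longrightarrow> f x \<ge> f xb + \<sigma> / 2 * (norm (x - xb))\<^sup>2)"

definition MSCQ :: "nat \<Rightarrow> nat \<Rightarrow> (nat \<Rightarrow> 'a::euclidean_space \<Rightarrow> real) \<Rightarrow> 'a \<Rightarrow> bool" where
  "MSCQ s m \<phi> xb \<longleftrightarrow> (\<exists>\<kappa>>0. \<exists>\<delta>>0. \<forall>x. dist x xb < \<delta> \<longrightarrow>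
     infdist x (feasible_set s m \<phi>) \<le>
       \<kappa> * ((\<Sum>i=1..s. max (\<phi> i x) 0) + (\<Sum>i=s+1..m. \<bar>\<phi> i x\<bar>)))"

definition active_set :: "nat \<Rightarrow> (nat \<Rightarrow> 'a \<Rightarrow> real) \<Rightarrow> 'a \<Rightarrow> nat set" where
  "active_set s \<phi> x = {i\<in>{1..s}. \<phi> i x = 0}"

definition LICQ :: "nat \<Rightarrow> nat \<Rightarrow> (nat \<Rightarrow> 'a::euclidean_space \<Rightarrow> real) \<Rightarrow> 'a \<Rightarrow> bool" where
  "LICQ s m \<phi> xb \<longleftrightarrow> (let J = active_set s \<phi> xb \<union> {s+1..m} in
     \<forall>c. (\<Sum>i\<in>J. c i *\<^sub>R grad (\<phi> i) xb) = 0 \<longrightarrow> (\<forall>i\<in>J. c i = 0))"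

text \<open>Lagrange multipliers y in R^s_+ x R^{m-s} (represented as functions nat => real,
  vanishing outside the index set {1..m}) with grad_x L(xb,y) = 0 and <y, g(xb)> = 0.\<close>
definition lagrange_multipliers ::
    "nat \<Rightarrow> nat \<Rightarrow> ('a::euclidean_space \<Rightarrow> real) \<Rightarrow> (nat \<Rightarrow> 'a \<Rightarrow> real) \<Rightarrow> 'a \<Rightarrow> (nat \<Rightarrow> real) set" where
  "lagrange_multipliers s m f \<phi> xb = {y.
     (\<forall>i. i \<notin> {1..m} \<longrightarrow> y i = 0) \<and> (\<forall>i\<in>{1..s}. y i \<ge> 0) \<and>
     grad f xb + (\<Sum>i=1..m. y i *\<^sub>R grad (\<phi> i) xb) = 0 \<and>
     (\<Sum>i=1..m. y i * \<phi> i xb) = 0}"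

definition critical_cone ::
    "nat \<Rightarrow> nat \<Rightarrow> (nat \<Rightarrow> 'a::euclidean_space \<Rightarrow> real) \<Rightarrow> 'a \<Rightarrow> (nat \<Rightarrow> real) \<Rightarrow> 'a set" where
  "critical_cone s m \<phi> x y = (let I = active_set s \<phi> x; Ip = {i\<in>I. y i > 0} in
     {w. (\<forall>i\<in>{s+1..m} \<union> Ip. grad (\<phi> i) x \<bullet> w = 0) \<and> (\<forall>i\<in>I - Ip. grad (\<phi> i) x \<bullet> w \<ge> 0)})"

definition regular_normal_cone :: "'a::real_inner set \<Rightarrow> 'a \<Rightarrow> 'a set" where
  "regular_normal_cone \<Omega> xb = {v. \<forall>e>0. \<exists>\<delta>>0. \<forall>x\<in>\<Omega>. dist x xb < \<delta> \<longrightarrow>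
      v \<bullet> (x - xb) \<le> e * norm (x - xb)}"

definition graph_grad :: "('a::euclidean_space \<Rightarrow> real) \<Rightarrow> ('a \<times> 'a) set" where
  "graph_grad f = {(x, grad f x) | x. f differentiable (at x)}"

definition second_subdiff :: "('a::euclidean_space \<Rightarrow> real) \<Rightarrow> 'a \<Rightarrow> 'a \<Rightarrow> 'a set" where
  "second_subdiff f xb w = {z. (z, - w) \<in> regular_normal_cone (graph_grad f) (xb, grad f xb)}"

end

theory Submission imports Defs begin

lemma grad_works:
  fixes f :: "'a::euclidean_space \<Rightarrow> real"
  assumes "f differentiable (at x)"
  shows "(f has_derivative (\<lambda>h. grad f x \<bullet> h)) (at x)"
proof -
  let ?F = "frechet_derivative f (at x)"
  have d: "(f has_derivative ?F) (at x)" using assms frechet_derivative_works by blast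
  then have lin: "linear ?F" using has_derivative_linear by blast
  have "?F h = grad f x \<bullet> h" for h
  proof -
    have "grad f x \<bullet> h = (\<Sum>b\<in>Basis. ?F b * (b \<bullet> h))"
      by (simp add: grad_def inner_sum_left)
    also have "\<dots> = (\<Sum>b\<in>Basis. ?F ((h \<bullet> b) *\<^sub>R b))"
      using lin by (simp add: linear_scale inner_commute mult.commute)
    also have "\<dots> = ?F (\<Sum>b\<in>Basis. (h \<bullet> b) *\<^sub>R b)"
      using lin by (simp add: linear_sum)
    also have "\<dots> = ?F h" by (simp add: euclidean_representation)
    finally show ?thesis by simp
  qed
  then have "?F = (\<lambda>h. grad f x \<bullet> h)" by auto
  then show ?thesis using d by simp
qed

lemma grad_eq:
  fixes f :: "'a::euclidean_space \<Rightarrow> real"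
  assumes "(f has_derivative (\<lambda>h. g \<bullet> h)) (at x)"
  shows "grad f x = g"
proof -
  have fd: "frechet_derivative f (at x) = (\<lambda>h. g \<bullet> h)"
    using frechet_derivative_at[OF assms] by simp
  have "grad f x = (\<Sum>b\<in>Basis. (g \<bullet> b) *\<^sub>R b)" using fd by (simp add: grad_def)
  also have "\<dots> = g" by (rule euclidean_representation)
  finally show ?thesis .
qed

lemma infdist_approx:
  assumes "a \<in> A" "e > 0"
  shows "\<exists>p\<in>A. dist x p < infdist x A + e"
proof (rule ccontr)
  assume "\<not> ?thesis"
  then have h: "\<forall>p\<in>A. infdist x A + e \<le> dist x p" by auto
  have ne: "A \<noteq> {}" using assms by auto
  have "infdist x A + e \<le> Inf (dist x ` A)"
    using ne h by (intro cINF_greatest) auto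
  then have "infdist x A + e \<le> infdist x A" using ne by (simp add: infdist_def)
  then show False using assms by simp
qed

lemma onorm_inner_le: "onorm (\<lambda>h::'a::real_inner. g \<bullet> h) \<le> norm g"
  by (rule onorm_bound) (auto simp: Cauchy_Schwarz_ineq2)



locale prob =
  fixes f :: "'a::euclidean_space \<Rightarrow> real" and \<phi> :: "nat \<Rightarrow> 'a \<Rightarrow> real"
    and s m :: nat and xb :: 'a and r Lf :: real and D :: "nat \<Rightarrow> 'a \<Rightarrow> 'a" and \<sigma> :: real
  assumes sm: "s \<le> m" and r: "r > 0"
    and fd: "\<And>x. x \<in> ball xb r \<Longrightarrow> (f has_derivative (\<lambda>h. grad f x \<bullet> h)) (at x)"
    and flip: "Lf-lipschitz_on (ball xb r) (grad f)"
    and phid: "\<And>i x. i \<in> {1..m} \<Longrightarrow> x \<in> ball xb r \<Longrightarrow>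
        (\<phi> i has_derivative (\<lambda>h. grad (\<phi> i) x \<bullet> h)) (at x)"
    and phiD: "\<And>i. i \<in> {1..m} \<Longrightarrow> (grad (\<phi> i) has_derivative D i) (at xb)"
    and feas: "xb \<in> feasible_set s m \<phi>"
    and qmin: "\<exists>\<epsilon>>0. \<forall>x\<in>feasible_set s m \<phi>. dist x xb < \<epsilon> \<longrightarrow>
        f x \<ge> f xb + \<sigma> / 2 * (norm (x - xb))\<^sup>2"
    and sig: "\<sigma> \<ge> 0"
    and mscq: "MSCQ s m \<phi> xb"
begin

definition viol :: "'a \<Rightarrow> real" where
  "viol x = (\<Sum>i=1..s. max (\<phi> i x) 0) + (\<Sum>i=s+1..m. \<bar>\<phi> i x\<bar>)"

lemma Lf_nonneg: "Lf \<ge> 0" using flip by (simp add: lipschitz_on_def)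

lemma xb_ball: "xb \<in> ball xb r" using r by simp

lemma f_lipschitz: "\<exists>B\<ge>0. \<forall>x\<in>ball xb r. \<forall>y\<in>ball xb r. \<bar>f x - f y\<bar> \<le> B * norm (x - y)"
proof -
  define B where "B = norm (grad f xb) + Lf * r"
  have bnd: "norm (grad f x) \<le> B" if "x \<in> ball xb r" for x
  proof -
    have "dist (grad f x) (grad f xb) \<le> Lf * dist x xb"
      using flip that xb_ball by (simp add: lipschitz_on_def)
    moreover have "Lf * dist x xb \<le> Lf * r"
      using that Lf_nonneg by (intro mult_left_mono) (auto simp: dist_commute)
    ultimately have "norm (grad f x - grad f xb) \<le> Lf * r" by (simp add: dist_norm)
    then show ?thesis unfolding B_def using norm_triangle_sub[of "grad f x" "grad f xb"] by linarith
  qed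
  have "B \<ge> 0" unfolding B_def using Lf_nonneg r by simp
  moreover have "\<bar>f x - f y\<bar> \<le> B * norm (x - y)" if "x \<in> ball xb r" "y \<in> ball xb r" for x y
  proof -
    have "norm (f x - f y) \<le> B * norm (x - y)"
    proof (rule differentiable_bound[where S="ball xb r" and f'="\<lambda>x h. grad f x \<bullet> h"])
      show "convex (ball xb r)" by simp
      show "(f has_derivative (\<lambda>h. grad f z \<bullet> h)) (at z within ball xb r)" if "z \<in> ball xb r" for z
        using fd[OF that] by (rule has_derivative_at_withinI)
      show "onorm (\<lambda>h. grad f z \<bullet> h) \<le> B" if "z \<in> ball xb r" for z
        using onorm_inner_le[of "grad f z"] bnd[OF that] by linarith
    qed (use that in auto)
    then show ?thesis by simp
  qed
  ultimately show ?thesis by blast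
qed

lemma exact_penalty:
  "\<exists>\<rho>>0. \<exists>C. \<forall>x. norm (x - xb) < \<rho> \<longrightarrow>
     f x \<ge> f xb + \<sigma> / 2 * (norm (x - xb))\<^sup>2 - C * viol x"
proof -
  obtain \<epsilon>0 where e0: "\<epsilon>0 > 0" and hmin: "\<And>x. x\<in>feasible_set s m \<phi> \<Longrightarrow> dist x xb < \<epsilon>0 \<Longrightarrow>
        f x \<ge> f xb + \<sigma> / 2 * (norm (x - xb))\<^sup>2" using qmin by blast
  obtain \<kappa> \<delta> where k: "\<kappa> > 0" "\<delta> > 0" and hm: "\<And>x. dist x xb < \<delta> \<Longrightarrow>
      infdist x (feasible_set s m \<phi>) \<le> \<kappa> * viol x"
    using mscq unfolding MSCQ_def viol_def by blast
  obtain B where B: "B \<ge> 0" "\<And>x y. x\<in>ball xb r \<Longrightarrow> y\<in>ball xb r \<Longrightarrow> \<bar>f x - f y\<bar> \<le> B * norm (x - y)"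
    using f_lipschitz by blast
  define \<rho> where "\<rho> = min \<delta> (min \<epsilon>0 r / 3)"
  have rho: "\<rho> > 0" "\<rho> \<le> \<delta>" "3 * \<rho> \<le> \<epsilon>0" "3 * \<rho> \<le> r" using k e0 r by (auto simp: \<rho>_def)
  define c where "c = 2 * \<sigma> * \<rho> + B"
  have c0: "c \<ge> 0" using sig rho B by (simp add: c_def)
  have main: "f x \<ge> f xb + \<sigma> / 2 * (norm (x - xb))\<^sup>2 - c * \<kappa> * viol x"
    if x: "norm (x - xb) < \<rho>" for x
  proof -
    have key: "f x \<ge> f xb + \<sigma> / 2 * (norm (x - xb))\<^sup>2 - c * (\<kappa> * viol x) - c * \<eta>"
      if \<eta>: "0 < \<eta>" "\<eta> < \<rho>" for \<eta>
    proof -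
      obtain p where p: "p \<in> feasible_set s m \<phi>" "dist x p < infdist x (feasible_set s m \<phi>) + \<eta>"
        using infdist_approx[OF feas \<eta>(1)] by blast
      have i1: "infdist x (feasible_set s m \<phi>) \<le> \<kappa> * viol x"
        using hm[of x] x rho by (simp add: dist_norm)
      have i2: "infdist x (feasible_set s m \<phi>) \<le> norm (x - xb)"
        using infdist_le[OF feas, of x] by (simp add: dist_norm)
      have xp: "norm (x - p) \<le> \<kappa> * viol x + \<eta>" using p(2) i1 by (simp add: dist_norm)
      have xp2: "norm (x - p) < 2 * \<rho>" using p(2) i2 x \<eta> by (simp add: dist_norm)
      have pxb: "norm (p - xb) < 3 * \<rho>"
        using norm_triangle_ineq[of "p - x" "x - xb"] xp2 x norm_minus_commute[of p x] by simp
      have fp: "f p \<ge> f xb + \<sigma> / 2 * (norm (p - xb))\<^sup>2"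
        using hmin[OF p(1)] pxb rho by (simp add: dist_norm)
      have xball: "x \<in> ball xb r" "p \<in> ball xb r" using x pxb rho
        by (auto simp: dist_norm norm_minus_commute)
      have fxp: "f x \<ge> f p - B * norm (x - p)" using B(2)[OF xball] by linarith
      have sq: "(norm (x - xb))\<^sup>2 \<le> (norm (p - xb))\<^sup>2 + 4 * \<rho> * norm (x - p)"
      proof -
        have t: "norm (x - xb) \<le> norm (p - xb) + norm (x - p)"
          using norm_triangle_ineq[of "x - p" "p - xb"] by simp
        have "(norm (x - xb))\<^sup>2 - (norm (p - xb))\<^sup>2
              = (norm (x - xb) - norm (p - xb)) * (norm (x - xb) + norm (p - xb))"
          by (simp add: power2_eq_square algebra_simps)
        also have "\<dots> \<le> norm (x - p) * (4 * \<rho>)"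
        proof (cases "norm (x - xb) \<le> norm (p - xb)")
          case True
          then have "(norm (x - xb) - norm (p - xb)) * (norm (x - xb) + norm (p - xb)) \<le> 0"
            by (intro mult_nonpos_nonneg) auto
          then show ?thesis using rho by (smt (verit) mult_nonneg_nonneg norm_ge_zero)
        next
          case False
          then show ?thesis using t x pxb
            by (intro mult_mono) auto
        qed
        finally show ?thesis by (simp add: algebra_simps)
      qed
      have "\<sigma> / 2 * (norm (x - xb))\<^sup>2 \<le> \<sigma> / 2 * (norm (p - xb))\<^sup>2 + 2 * \<sigma> * \<rho> * norm (x - p)"
        using mult_left_mono[OF sq, of "\<sigma>/2"] sig by (simp add: algebra_simps)
      then have "f x \<ge> f xb + \<sigma> / 2 * (norm (x - xb))\<^sup>2 - c * norm (x - p)"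
        using fp fxp unfolding c_def by (simp add: algebra_simps)
      moreover have "c * norm (x - p) \<le> c * (\<kappa> * viol x) + c * \<eta>"
        using mult_left_mono[OF xp c0] by (simp add: algebra_simps)
      ultimately show ?thesis by linarith
    qed
    have "f xb + \<sigma> / 2 * (norm (x - xb))\<^sup>2 - c * (\<kappa> * viol x) \<le> f x + e" if e: "e > 0" for e
    proof -
      define \<eta> where "\<eta> = min (\<rho> / 2) (e / (c + 1))"
      have "0 < \<eta>" "\<eta> < \<rho>" using rho e c0 by (auto simp: \<eta>_def)
      from key[OF this] have "f x \<ge> f xb + \<sigma> / 2 * (norm (x - xb))\<^sup>2 - c * (\<kappa> * viol x) - c * \<eta>" .
      moreover have "c * \<eta> \<le> e"
      proof -
        have "c * \<eta> \<le> c * (e / (c + 1))" using c0 by (intro mult_left_mono) (auto simp: \<eta>_def)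
        also have "\<dots> \<le> e" using c0 e by (simp add: field_simps)
        finally show ?thesis .
      qed
      ultimately show ?thesis by linarith
    qed
    then have "f xb + \<sigma> / 2 * (norm (x - xb))\<^sup>2 - c * (\<kappa> * viol x) \<le> f x"
      by (rule field_le_epsilon)
    then show ?thesis by (simp add: mult.assoc)
  qed
  show ?thesis using rho main by blast
qed

end


lemma taylor2:
  fixes \<phi> :: "'a::euclidean_space \<Rightarrow> real"
  assumes r: "r > 0"
    and d1: "\<And>x. x \<in> ball xb r \<Longrightarrow> (\<phi> has_derivative (\<lambda>h. grad \<phi> x \<bullet> h)) (at x)"
    and d2: "(grad \<phi> has_derivative D) (at xb)"
    and \<eta>: "\<eta> > 0"
  shows "eventually (\<lambda>t. \<bar>\<phi> (xb + t *\<^sub>R w + t\<^sup>2 *\<^sub>R u) - \<phi> xb - t * (grad \<phi> xb \<bullet> w)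
            - t\<^sup>2 * (grad \<phi> xb \<bullet> u + D w \<bullet> w / 2)\<bar> \<le> \<eta> * t\<^sup>2) (at_right 0)"
proof -
  define g0 where "g0 = grad \<phi> xb"
  define c where "c t = xb + t *\<^sub>R w + t\<^sup>2 *\<^sub>R u" for t :: real
  define k where "k t = \<phi> (c t) - \<phi> xb - t * (g0 \<bullet> w) - t\<^sup>2 * (g0 \<bullet> u + D w \<bullet> w / 2)" for t
  define M where "M = norm w + norm u"
  define M2 where "M2 = norm w + 2 * norm u"
  define K where "K = 2 * norm (D w) * norm u + norm (D u) * M2"
  have lin: "linear D" using d2 has_derivative_linear by blast
  have bl: "bounded_linear D" using d2 has_derivative_bounded_linear by blast
  have M0: "M \<ge> 0" "M2 \<ge> 0" "K \<ge> 0" by (auto simp: M_def M2_def K_def)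
  define e where "e = \<eta> / (2 * (M * M2 + 1))"
  have e0: "e > 0" using \<eta> M0 unfolding e_def by (intro divide_pos_pos) (auto intro!: add_nonneg_pos)
  have eM: "e * M * M2 \<le> \<eta> / 2"
  proof -
    have "e * (M * M2) \<le> e * (M * M2 + 1)" using e0 by simp
    also have "\<dots> = \<eta> / 2"
    proof -
      have "M * M2 + 1 > 0" using M0 by (simp add: add_nonneg_pos)
      then show ?thesis unfolding e_def by (simp add: field_simps)
    qed
    finally show ?thesis by (simp add: mult.assoc)
  qed
  obtain d where d: "d > 0" and hd: "\<And>y. norm (y - xb) < d \<Longrightarrow>
      norm (grad \<phi> y - grad \<phi> xb - D (y - xb)) \<le> e * norm (y - xb)"
    using d2 e0 unfolding has_derivative_at_alt by blast
  define \<tau> where "\<tau> = min 1 (min (min d r / (M + 1)) (\<eta> / (2 * (K + 1))))"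
  have tau: "\<tau> > 0" "\<tau> \<le> 1" "\<tau> * (M + 1) \<le> min d r" "\<tau> * K \<le> \<eta> / 2"
  proof -
    show "\<tau> > 0" "\<tau> \<le> 1" using d r \<eta> M0 by (auto simp: \<tau>_def)
    have "\<tau> \<le> min d r / (M + 1)" by (simp add: \<tau>_def)
    then show "\<tau> * (M + 1) \<le> min d r" using M0 by (simp add: field_simps)
    have "\<tau> \<le> \<eta> / (2 * (K + 1))" by (simp add: \<tau>_def)
    then have "\<tau> * (K + 1) \<le> \<eta> / 2" using M0 by (simp add: field_simps)
    moreover have "\<tau> * K \<le> \<tau> * (K + 1)" using \<open>\<tau> > 0\<close> by simp
    ultimately show "\<tau> * K \<le> \<eta> / 2" by linarith
  qed
  have cdiff: "c t - xb = t *\<^sub>R w + t\<^sup>2 *\<^sub>R u" for t by (simp add: c_def)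
  have cx: "norm (c t - xb) \<le> t * M" if "0 \<le> t" "t \<le> 1" for t
  proof -
    have "norm (c t - xb) \<le> norm (t *\<^sub>R w) + norm (t\<^sup>2 *\<^sub>R u)"
      unfolding cdiff by (rule norm_triangle_ineq)
    also have "\<dots> = t * norm w + t\<^sup>2 * norm u" using that by simp
    also have "t\<^sup>2 * norm u \<le> t * norm u"
      using that by (intro mult_right_mono) (auto simp: power2_eq_square intro: mult_left_le_one_le)
    finally show ?thesis by (simp add: M_def algebra_simps)
  qed
  have cin: "norm (c t - xb) < d \<and> c t \<in> ball xb r" if "0 \<le> t" "t < \<tau>" for t
  proof -
    have "t * M \<le> \<tau> * M" using that M0 by (intro mult_right_mono) auto
    also have "\<dots> < \<tau> * (M + 1)" using tau by simp
    finally have "norm (c t - xb) < min d r" using cx[of t] that tau by linarith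
    then show ?thesis by (simp add: dist_norm norm_minus_commute)
  qed
  define k' where "k' t = grad \<phi> (c t) \<bullet> (w + (2 * t) *\<^sub>R u) - g0 \<bullet> w - 2 * t * (g0 \<bullet> u + D w \<bullet> w / 2)" for t
  have kder: "(k has_real_derivative k' t) (at t)" if "c t \<in> ball xb r" for t
  proof -
    have cd: "(c has_derivative (\<lambda>h. h *\<^sub>R (w + (2 * t) *\<^sub>R u))) (at t)"
      unfolding c_def
      by (auto intro!: derivative_eq_intros simp: algebra_simps fun_eq_iff)
    have hc: "((\<phi> \<circ> c) has_derivative ((\<lambda>h. grad \<phi> (c t) \<bullet> h) \<circ> (\<lambda>h. h *\<^sub>R (w + (2 * t) *\<^sub>R u)))) (at t)"
      by (rule diff_chain_at[OF cd d1[OF that]])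
    have h1: "((\<lambda>t. \<phi> (c t)) has_real_derivative grad \<phi> (c t) \<bullet> (w + (2 * t) *\<^sub>R u)) (at t)"
      unfolding has_field_derivative_def
      by (rule has_derivative_eq_rhs[OF hc[unfolded o_def]]) (auto simp: fun_eq_iff)
    show ?thesis unfolding k_def k'_def
      by (rule derivative_eq_intros h1 | simp add: power2_eq_square)+
  qed
  have kbound: "\<bar>k' t\<bar> \<le> \<eta> * t" if t: "0 < t" "t < \<tau>" for t
  proof -
    define v where "v = w + (2 * t) *\<^sub>R u"
    define gc where "gc = grad \<phi> (c t)"
    define \<rho> where "\<rho> = gc - g0 - D (c t - xb)"
    have t1: "t \<le> 1" using t tau by simp
    have nv: "norm v \<le> M2"
    proof -
      have "norm v \<le> norm w + norm ((2 * t) *\<^sub>R u)" unfolding v_def by (rule norm_triangle_ineq)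
      also have "\<dots> = norm w + 2 * t * norm u" using t by simp
      also have "\<dots> \<le> norm w + 2 * norm u" using t1 t by (simp add: mult_left_le_one_le)
      finally show ?thesis by (simp add: M2_def)
    qed
    have nrho: "norm \<rho> \<le> e * (t * M)"
    proof -
      have "norm \<rho> \<le> e * norm (c t - xb)" unfolding \<rho>_def gc_def g0_def
        using hd cin[of t] t by auto
      also have "\<dots> \<le> e * (t * M)" using cx[of t] t t1 e0 by (intro mult_left_mono) auto
      finally show ?thesis .
    qed
    have Dc: "D (c t - xb) = t *\<^sub>R D w + t\<^sup>2 *\<^sub>R D u"
      unfolding cdiff using lin by (simp add: linear_add linear_scale)
    have eq: "k' t = \<rho> \<bullet> v + t\<^sup>2 * (2 * (D w \<bullet> u)) + t\<^sup>2 * (D u \<bullet> v)"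
    proof -
      have "gc = \<rho> + t *\<^sub>R D w + t\<^sup>2 *\<^sub>R D u + g0" unfolding \<rho>_def using Dc by (simp add: algebra_simps)
      then have "k' t = (\<rho> + t *\<^sub>R D w + t\<^sup>2 *\<^sub>R D u + g0) \<bullet> v - g0 \<bullet> w - 2 * t * (g0 \<bullet> u + D w \<bullet> w / 2)"
        unfolding k'_def gc_def v_def by simp
      also have "\<dots> = \<rho> \<bullet> v + t\<^sup>2 * (2 * (D w \<bullet> u)) + t\<^sup>2 * (D u \<bullet> v)"
        unfolding v_def by (simp add: inner_add_left inner_add_right algebra_simps power2_eq_square)
      finally show ?thesis .
    qed
    have b1: "\<bar>\<rho> \<bullet> v\<bar> \<le> e * (t * M) * M2"
      using Cauchy_Schwarz_ineq2[of \<rho> v] nrho nv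
      by (smt (verit) mult_mono norm_ge_zero)
    have b2: "\<bar>2 * (D w \<bullet> u)\<bar> \<le> 2 * norm (D w) * norm u"
      using Cauchy_Schwarz_ineq2[of "D w" u] by simp
    have b3: "\<bar>D u \<bullet> v\<bar> \<le> norm (D u) * M2"
      using Cauchy_Schwarz_ineq2[of "D u" v] nv
      by (smt (verit) mult_left_mono norm_ge_zero)
    have "\<bar>k' t\<bar> \<le> e * (t * M) * M2 + t\<^sup>2 * K"
    proof -
      have "\<bar>k' t\<bar> \<le> \<bar>\<rho> \<bullet> v\<bar> + t\<^sup>2 * \<bar>2 * (D w \<bullet> u)\<bar> + t\<^sup>2 * \<bar>D u \<bullet> v\<bar>"
      proof -
        have "\<bar>t\<^sup>2 * (2 * (D w \<bullet> u))\<bar> = t\<^sup>2 * \<bar>2 * (D w \<bullet> u)\<bar>"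
             "\<bar>t\<^sup>2 * (D u \<bullet> v)\<bar> = t\<^sup>2 * \<bar>D u \<bullet> v\<bar>" by (simp_all only: abs_mult abs_power2 power2_abs)
        then show ?thesis unfolding eq by (smt (verit))
      qed
      also have "\<dots> \<le> e * (t * M) * M2 + t\<^sup>2 * (2 * norm (D w) * norm u) + t\<^sup>2 * (norm (D u) * M2)"
        using b1 b2 b3 by (intro add_mono mult_left_mono) auto
      finally show ?thesis by (simp add: K_def algebra_simps)
    qed
    also have "\<dots> \<le> t * (\<eta> / 2) + t * (\<eta> / 2)"
    proof (intro add_mono)
      show "e * (t * M) * M2 \<le> t * (\<eta> / 2)" using eM t
        by (metis mult.assoc mult.left_commute mult_le_cancel_left_pos)
      have "t\<^sup>2 * K = t * (t * K)" by (simp add: power2_eq_square)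
      also have "t * K \<le> \<tau> * K" using t M0 by (intro mult_right_mono) auto
      then have "t * (t * K) \<le> t * (\<eta> / 2)" using tau t by (intro mult_left_mono) auto
      finally show "t\<^sup>2 * K \<le> t * (\<eta> / 2)" .
    qed
    finally show ?thesis by simp
  qed
  have k0: "k 0 = 0" by (simp add: k_def c_def)
  have "\<bar>k t\<bar> \<le> \<eta> * t\<^sup>2" if t: "0 < t" "t < \<tau>" for t
  proof -
    have dk: "(k has_real_derivative k' x) (at x)" if "0 \<le> x" "x \<le> t" for x
      using kder cin that t by auto
    have "continuous_on {0..t} k"
    proof (rule continuous_at_imp_continuous_on, rule ballI)
      fix x assume "x \<in> {0..t}"
      then show "isCont k x" using DERIV_isCont[OF dk[of x]] by auto
    qed
    moreover have "k differentiable (at x)" if "0 < x" "x < t" for x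
      using dk[of x] that unfolding real_differentiable_def by auto
    ultimately obtain l \<xi> where xi: "0 < \<xi>" "\<xi> < t" "DERIV k \<xi> :> l" "k t - k 0 = (t - 0) * l"
      using MVT[OF t(1)] by blast
    have "l = k' \<xi>" using DERIV_unique[OF xi(3) dk[of \<xi>]] xi by simp
    then have "\<bar>k t\<bar> = t * \<bar>k' \<xi>\<bar>" using xi k0 t by (simp add: abs_mult)
    also have "\<dots> \<le> t * (\<eta> * \<xi>)" using kbound[of \<xi>] xi t by (intro mult_left_mono) auto
    also have "\<dots> \<le> t * (\<eta> * t)" using xi \<eta> t by (intro mult_left_mono) auto
    finally show ?thesis by (simp add: power2_eq_square algebra_simps)
  qed
  then show ?thesis unfolding eventually_at_right_field k_def c_def g0_def using tau(1) by blast
qed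


lemma convex_cone_sum_mem:
  assumes "convex_cone S" "finite A" "\<And>j. j \<in> A \<Longrightarrow> h j \<in> S"
  shows "sum h A \<in> S"
  using assms(2,3)
proof (induction A rule: finite_induct)
  case empty then show ?case using assms(1) convex_cone_contains_0 by simp
next
  case (insert a A)
  then have "h a \<in> S" "sum h A \<in> S" by auto
  then show ?case using insert(1,2) assms(1) convex_cone_add by simp
qed

lemma farkas:
  fixes g :: "nat \<Rightarrow> 'v::euclidean_space"
  assumes fin: "finite J" and EJ: "E \<subseteq> J"
    and nK: "\<not> (\<exists>c. (\<forall>j\<in>J-E. c j \<ge> 0) \<and> v = (\<Sum>j\<in>J. c j *\<^sub>R g j))"
  shows "\<exists>d. d \<bullet> v < 0 \<and> (\<forall>j\<in>J. d \<bullet> g j \<ge> 0) \<and> (\<forall>j\<in>E. d \<bullet> g j = 0)"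
proof -
  define K where "K = {x. \<exists>c. (\<forall>j\<in>J-E. c j \<ge> 0) \<and> x = (\<Sum>j\<in>J. c j *\<^sub>R g j)}"
  define S where "S = g ` J \<union> (\<lambda>j. - g j) ` E"
  have finS: "finite S" using fin EJ finite_subset by (auto simp: S_def)
  have ccK: "convex_cone K"
    unfolding convex_cone_iff
  proof (intro conjI ballI allI impI)
    show "0 \<in> K" unfolding K_def by (rule CollectI, rule exI[of _ "\<lambda>_. 0"]) simp
    fix x y assume "x \<in> K" "y \<in> K"
    then obtain c c' where "\<forall>j\<in>J-E. c j \<ge> 0" "x = (\<Sum>j\<in>J. c j *\<^sub>R g j)"
        "\<forall>j\<in>J-E. c' j \<ge> 0" "y = (\<Sum>j\<in>J. c' j *\<^sub>R g j)" unfolding K_def by blast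
    then show "x + y \<in> K" unfolding K_def
      by (intro CollectI exI[of _ "\<lambda>j. c j + c' j"]) (auto simp: sum.distrib scaleR_add_left)
  next
    fix x and a :: real assume "x \<in> K" "0 \<le> a"
    then obtain c where "\<forall>j\<in>J-E. c j \<ge> 0" "x = (\<Sum>j\<in>J. c j *\<^sub>R g j)" unfolding K_def by blast
    then show "a *\<^sub>R x \<in> K" using \<open>0 \<le> a\<close> unfolding K_def
      by (intro CollectI exI[of _ "\<lambda>j. a * c j"]) (auto simp: scaleR_sum_right)
  qed
  have SK: "S \<subseteq> K"
  proof
    fix x assume "x \<in> S"
    then consider j where "j \<in> J" "x = g j" | j where "j \<in> E" "x = - g j" unfolding S_def by blast
    then show "x \<in> K"
    proof cases
      case 1 then show ?thesis unfolding K_def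
        by (intro CollectI exI[of _ "\<lambda>i. if i = j then 1 else 0"])
           (auto simp: if_distrib[of "\<lambda>c. c *\<^sub>R _"] sum.delta[OF fin] cong: if_cong)
    next
      case 2 then have "j \<in> J" using EJ by auto
      with 2 show ?thesis unfolding K_def
        by (intro CollectI exI[of _ "\<lambda>i. if i = j then -1 else 0"])
           (auto simp: if_distrib[of "\<lambda>c. c *\<^sub>R _"] sum.delta[OF fin] cong: if_cong)
    qed
  qed
  have KS: "K \<subseteq> convex_cone hull S"
  proof
    fix x assume "x \<in> K"
    then obtain c where c: "\<forall>j\<in>J-E. c j \<ge> 0" "x = (\<Sum>j\<in>J. c j *\<^sub>R g j)" unfolding K_def by blast
    have "c j *\<^sub>R g j \<in> convex_cone hull S" if "j \<in> J" for j
    proof (cases "c j \<ge> 0")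
      case True
      have "g j \<in> convex_cone hull S" using that by (auto simp: S_def intro: hull_inc)
      then show ?thesis using True convex_cone_hull_mul by blast
    next
      case False
      then have "j \<in> E" using c that by auto
      then have "- g j \<in> convex_cone hull S" by (auto simp: S_def intro: hull_inc)
      then have "(- c j) *\<^sub>R (- g j) \<in> convex_cone hull S" using False convex_cone_hull_mul[of "- g j" S "- c j"] by simp
      then show ?thesis by simp
    qed
    then show "x \<in> convex_cone hull S" unfolding c(2)
      by (intro convex_cone_sum_mem[OF convex_cone_convex_cone_hull fin])
  qed
  have "K = convex_cone hull S"
    using KS hull_minimal[OF SK, of convex_cone] ccK by auto
  then have clK: "closed K" using closed_convex_cone_hull[OF finS] by simp
  have cvK: "convex K" using ccK by (simp add: convex_cone_def)
  have vK: "v \<notin> K" using nK unfolding K_def by blast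
  obtain a b where ab: "a \<bullet> v < b" "\<forall>x\<in>K. a \<bullet> x > b"
    using separating_hyperplane_closed_point[OF cvK clK vK] by blast
  have b0: "b < 0" using ab(2) convex_cone_contains_0[OF ccK] by force
  have pos: "a \<bullet> x \<ge> 0" if "x \<in> K" for x
  proof (rule ccontr)
    assume "\<not> a \<bullet> x \<ge> 0"
    then have neg: "a \<bullet> x < 0" by simp
    define l where "l = b / (a \<bullet> x)"
    have "l \<ge> 0" using neg b0 by (simp add: l_def divide_nonpos_neg)
    then have "l *\<^sub>R x \<in> K" using ccK that convex_cone_scaleR by blast
    then have "a \<bullet> (l *\<^sub>R x) > b" using ab by blast
    moreover have "a \<bullet> (l *\<^sub>R x) = b" using neg by (simp add: l_def)
    ultimately show False by simp
  qed
  have "a \<bullet> v < 0" using ab b0 by simp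
  moreover have "\<forall>j\<in>J. a \<bullet> g j \<ge> 0" using SK pos by (auto simp: S_def)
  moreover have "\<forall>j\<in>E. a \<bullet> g j = 0"
  proof
    fix j assume "j \<in> E"
    then have "g j \<in> K" "- g j \<in> K" using SK EJ by (auto simp: S_def)
    then have "a \<bullet> g j \<ge> 0" "a \<bullet> (- g j) \<ge> 0" using pos by blast+
    then show "a \<bullet> g j = 0" by simp
  qed
  ultimately show ?thesis by blast
qed



lemma ev_pick: "eventually P (at_right (0::real)) \<Longrightarrow> \<exists>t>0. P t"
proof -
  assume h: "eventually P (at_right (0::real))"
  have "eventually (\<lambda>t. t > 0 \<and> P t) (at_right (0::real))"
    by (rule eventually_conj[OF eventually_at_right_less h])
  then show ?thesis using eventually_happens'[of "at_right (0::real)"] by auto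
qed

lemma tendsto_line: "((\<lambda>t. (xb::'a::real_normed_vector) + t *\<^sub>R w + t\<^sup>2 *\<^sub>R u) \<longlongrightarrow> xb) (at_right (0::real))"
proof -
  have "((\<lambda>t. xb + t *\<^sub>R w + t\<^sup>2 *\<^sub>R u) \<longlongrightarrow> xb + (0::real) *\<^sub>R w + 0\<^sup>2 *\<^sub>R u) (at_right (0::real))"
    by (auto intro!: tendsto_eq_intros)
  then show ?thesis by simp
qed

context prob begin

abbreviation "Act \<equiv> active_set s \<phi> xb"
abbreviation "Eq \<equiv> {s+1..m}"

lemma Act_sub: "Act \<subseteq> {1..s}" by (auto simp: active_set_def)
lemma Act_Eq: "Act \<inter> Eq = {}" by (auto simp: active_set_def)
lemma fin_Act: "finite Act" using Act_sub finite_subset by blast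
lemma AE_sub: "Act \<union> Eq \<subseteq> {1..m}" using Act_sub sm by auto

lemma feas_ineq: "i \<in> {1..s} \<Longrightarrow> \<phi> i xb \<le> 0" using feas by (simp add: feasible_set_def)
lemma feas_eq: "i \<in> Eq \<Longrightarrow> \<phi> i xb = 0" using feas by (simp add: feasible_set_def)

lemma phi_isCont: "i \<in> {1..m} \<Longrightarrow> isCont (\<phi> i) xb"
  using phid[OF _ xb_ball] has_derivative_continuous by blast

lemma viol_small:
  fixes c :: "real \<Rightarrow> 'a" and e :: "real \<Rightarrow> real"
  assumes ct: "(c \<longlongrightarrow> xb) (at_right 0)"
    and act: "\<And>i. i \<in> Act \<Longrightarrow> eventually (\<lambda>t. \<phi> i (c t) \<le> e t) (at_right 0)"
    and eq: "\<And>i. i \<in> Eq \<Longrightarrow> eventually (\<lambda>t. \<bar>\<phi> i (c t)\<bar> \<le> e t) (at_right 0)"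
    and e0: "eventually (\<lambda>t. e t \<ge> 0) (at_right 0)"
  shows "eventually (\<lambda>t. viol (c t) \<le> real m * e t) (at_right 0)"
proof -
  have ineq: "eventually (\<lambda>t. max (\<phi> i (c t)) 0 \<le> e t) (at_right 0)" if i: "i \<in> {1..s}" for i
  proof (cases "i \<in> Act")
    case True
    then show ?thesis using act[OF True] e0 by (auto elim: eventually_mono[OF eventually_conj])
  next
    case False
    then have neg: "\<phi> i xb < 0" using feas_ineq[OF i] i by (auto simp: active_set_def)
    have "((\<lambda>t. \<phi> i (c t)) \<longlongrightarrow> \<phi> i xb) (at_right 0)"
      using isCont_tendsto_compose[OF phi_isCont ct] i sm by auto
    then have "eventually (\<lambda>t. \<phi> i (c t) < 0) (at_right 0)"
      using neg by (rule order_tendstoD)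
    then show ?thesis using e0 by (auto elim: eventually_mono[OF eventually_conj])
  qed
  have all1: "eventually (\<lambda>t. \<forall>i\<in>{1..s}. max (\<phi> i (c t)) 0 \<le> e t) (at_right 0)"
    using ineq by (intro eventually_ball_finite) auto
  have all2: "eventually (\<lambda>t. \<forall>i\<in>Eq. \<bar>\<phi> i (c t)\<bar> \<le> e t) (at_right 0)"
    using eq by (intro eventually_ball_finite) auto
  show ?thesis
  proof (rule eventually_mono[OF eventually_conj[OF all1 all2]])
    fix t assume h: "(\<forall>i\<in>{1..s}. max (\<phi> i (c t)) 0 \<le> e t) \<and> (\<forall>i\<in>Eq. \<bar>\<phi> i (c t)\<bar> \<le> e t)"
    have "viol (c t) \<le> (\<Sum>i=1..s. e t) + (\<Sum>i=s+1..m. e t)"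
      unfolding viol_def using h by (intro add_mono sum_mono) auto
    also have "\<dots> = real s * e t + real (m - s) * e t" by simp
    also have "\<dots> = real m * e t" using sm by (simp add: of_nat_diff algebra_simps)
    finally show "viol (c t) \<le> real m * e t" .
  qed
qed

lemma first_order:
  assumes dA: "\<And>i. i \<in> Act \<Longrightarrow> grad (\<phi> i) xb \<bullet> d \<le> 0"
    and dE: "\<And>i. i \<in> Eq \<Longrightarrow> grad (\<phi> i) xb \<bullet> d = 0"
  shows "grad f xb \<bullet> d \<ge> 0"
proof (rule ccontr)
  assume "\<not> ?thesis"
  then have a: "- (grad f xb \<bullet> d) > 0" by simp
  define a where "a = - (grad f xb \<bullet> d)"
  define K where "K = 1 + (\<Sum>i=1..m. \<bar>D i d \<bullet> d\<bar>)"
  define c where "c t = xb + t *\<^sub>R d + t\<^sup>2 *\<^sub>R (0::'a)" for t :: real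
  have K1: "K \<ge> 1" by (simp add: K_def sum_nonneg)
  have tay: "eventually (\<lambda>t. \<bar>\<phi> i (c t) - \<phi> i xb - t * (grad (\<phi> i) xb \<bullet> d)\<bar> \<le> K * t\<^sup>2) (at_right 0)"
    if i: "i \<in> {1..m}" for i
  proof -
    have Dle: "\<bar>D i d \<bullet> d\<bar> / 2 \<le> K - 1"
    proof -
      have "\<bar>D i d \<bullet> d\<bar> \<le> (\<Sum>i=1..m. \<bar>D i d \<bullet> d\<bar>)"
        using i by (intro member_le_sum) auto
      then show ?thesis unfolding K_def by linarith
    qed
    show ?thesis
    proof (rule eventually_mono[OF taylor2[OF r phid[OF i] phiD[OF i] zero_less_one, of d 0]])
      fix t assume h: "\<bar>\<phi> i (xb + t *\<^sub>R d + t\<^sup>2 *\<^sub>R 0) - \<phi> i xb - t * (grad (\<phi> i) xb \<bullet> d) -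
             t\<^sup>2 * (grad (\<phi> i) xb \<bullet> 0 + D i d \<bullet> d / 2)\<bar> \<le> 1 * t\<^sup>2"
      have "\<bar>t\<^sup>2 * (D i d \<bullet> d / 2)\<bar> = t\<^sup>2 * (\<bar>D i d \<bullet> d\<bar> / 2)" by (simp add: abs_mult)
      also have "\<dots> \<le> t\<^sup>2 * (K - 1)" using Dle by (intro mult_left_mono) auto
      finally have "\<bar>t\<^sup>2 * (D i d \<bullet> d / 2)\<bar> \<le> t\<^sup>2 * (K - 1)" .
      then show "\<bar>\<phi> i (c t) - \<phi> i xb - t * (grad (\<phi> i) xb \<bullet> d)\<bar> \<le> K * t\<^sup>2"
        using h unfolding c_def by (simp add: algebra_simps)
    qed simp
  qed
  have ct: "(c \<longlongrightarrow> xb) (at_right 0)" unfolding c_def by (rule tendsto_line)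
  have vs: "eventually (\<lambda>t. viol (c t) \<le> real m * (K * t\<^sup>2)) (at_right 0)"
  proof (rule viol_small[OF ct])
    fix i assume i: "i \<in> Act"
    then have i': "i \<in> {1..m}" "\<phi> i xb = 0" using AE_sub by (auto simp: active_set_def)
    show "eventually (\<lambda>t. \<phi> i (c t) \<le> K * t\<^sup>2) (at_right 0)"
    proof (rule eventually_mono[OF eventually_conj[OF tay[OF i'(1)] eventually_at_right_less]])
      fix t assume h: "\<bar>\<phi> i (c t) - \<phi> i xb - t * (grad (\<phi> i) xb \<bullet> d)\<bar> \<le> K * t\<^sup>2 \<and> 0 < t"
      have "t * (grad (\<phi> i) xb \<bullet> d) \<le> 0" using h dA[OF i] by (simp add: mult_nonneg_nonpos)
      then show "\<phi> i (c t) \<le> K * t\<^sup>2" using h i'(2) by linarith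
    qed
  next
    fix i assume i: "i \<in> Eq"
    then have i': "i \<in> {1..m}" using sm by auto
    show "eventually (\<lambda>t. \<bar>\<phi> i (c t)\<bar> \<le> K * t\<^sup>2) (at_right 0)"
      using tay[OF i'] by (rule eventually_mono) (simp add: feas_eq[OF i] dE[OF i])
  next
    show "eventually (\<lambda>t. 0 \<le> K * t\<^sup>2) (at_right 0)" using K1 by simp
  qed
  obtain \<rho> C where rho: "\<rho> > 0" and pen: "\<And>x. norm (x - xb) < \<rho> \<Longrightarrow>
      f x \<ge> f xb + \<sigma> / 2 * (norm (x - xb))\<^sup>2 - C * viol x"
    using exact_penalty by blast
  have ev_rho: "eventually (\<lambda>t. norm (c t - xb) < \<rho>) (at_right 0)"
    using ct rho unfolding tendsto_iff dist_norm by blast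
  define e where "e = a / (2 * (norm d + 1))"
  have a0: "a > 0" using a by (simp add: a_def)
  have e0: "e > 0" unfolding e_def using a0 by (intro divide_pos_pos) (auto intro: add_nonneg_pos)
  obtain \<delta> where \<delta>: "\<delta> > 0" and hf: "\<And>y. norm (y - xb) < \<delta> \<Longrightarrow>
      norm (f y - f xb - grad f xb \<bullet> (y - xb)) \<le> e * norm (y - xb)"
    using fd[OF xb_ball] e0 unfolding has_derivative_at_alt by blast
  have ev_delta: "eventually (\<lambda>t. norm (c t - xb) < \<delta>) (at_right 0)"
    using ct \<delta> unfolding tendsto_iff dist_norm by blast
  define B where "B = \<bar>C\<bar> * real m * K"
  have ev_small: "eventually (\<lambda>t. t < a / (2 * (B + 1))) (at_right 0)"
  proof -
    have "B \<ge> 0" using K1 by (simp add: B_def)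
    then have "a / (2 * (B + 1)) > 0" using a0 by (intro divide_pos_pos) auto
    then show ?thesis unfolding eventually_at_right_field by auto
  qed
  obtain t where t: "t > 0" "viol (c t) \<le> real m * (K * t\<^sup>2)" "norm (c t - xb) < \<rho>"
    "norm (c t - xb) < \<delta>" "t < a / (2 * (B + 1))"
    using ev_pick[OF eventually_conj[OF vs eventually_conj[OF ev_rho eventually_conj[OF ev_delta ev_small]]]]
    by blast
  have cdt: "c t - xb = t *\<^sub>R d" by (simp add: c_def)
  have v0: "viol (c t) \<ge> 0" unfolding viol_def by (intro add_nonneg_nonneg sum_nonneg) auto
  have "C * viol (c t) \<le> \<bar>C\<bar> * (real m * (K * t\<^sup>2))"
  proof -
    have "C * viol (c t) \<le> \<bar>C\<bar> * viol (c t)" using v0 by (intro mult_right_mono) auto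
    also have "\<dots> \<le> \<bar>C\<bar> * (real m * (K * t\<^sup>2))" using t(2) by (intro mult_left_mono) auto
    finally show ?thesis .
  qed
  moreover have "\<bar>C\<bar> * (real m * (K * t\<^sup>2)) = B * t\<^sup>2" by (simp add: B_def mult.assoc)
  moreover have "\<sigma> / 2 * (norm (c t - xb))\<^sup>2 \<ge> 0" using sig by simp
  ultimately have lo: "f (c t) \<ge> f xb - B * t\<^sup>2"
    using pen[OF t(3)] by linarith
  have "f (c t) - f xb - t * (grad f xb \<bullet> d) \<le> e * (t * norm d)"
    using hf[OF t(4)] t(1) unfolding cdt by (simp add: abs_le_iff)
  also have "e * (t * norm d) \<le> t * (a / 2)"
  proof -
    have q: "norm d / (norm d + 1) \<le> 1"
      using norm_ge_zero[of d] by (simp add: divide_le_eq add_nonneg_pos)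
    have "e * norm d = (a / 2) * (norm d / (norm d + 1))" unfolding e_def by simp
    also have "\<dots> \<le> (a / 2) * 1" using q a0 by (intro mult_left_mono) auto
    finally have "e * norm d \<le> a / 2" by simp
    then show ?thesis using t(1) by (metis mult.left_commute mult_le_cancel_left_pos)
  qed
  finally have hi: "f (c t) \<le> f xb - t * (a / 2)" unfolding a_def by (simp add: algebra_simps)
  have "t * (a / 2) \<le> B * t\<^sup>2" using lo hi by linarith
  then have "a / 2 \<le> B * t" using t(1) by (simp add: power2_eq_square algebra_simps)
  moreover have "B * t < a / 2"
  proof -
    have B0: "B \<ge> 0" using K1 by (simp add: B_def)
    have "(B + 1) * t < a / 2" using t(5) B0 by (simp add: field_simps)
    then show ?thesis using t(1) by (simp add: algebra_simps)
  qed
  ultimately show False by simp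
qed

end


context prob begin

lemma LM_sub: "Act \<union> Eq \<subseteq> {1..m}" by (rule AE_sub)

lemma kkt_exists: "lagrange_multipliers s m f \<phi> xb \<noteq> {}"
proof -
  define J where "J = Act \<union> Eq"
  have finJ: "finite J" unfolding J_def using fin_Act by simp
  have EJ: "Eq \<subseteq> J" unfolding J_def by auto
  have JE: "J - Eq = Act" unfolding J_def using Act_Eq by auto
  have "\<exists>c. (\<forall>j\<in>J-Eq. c j \<ge> 0) \<and> - grad f xb = (\<Sum>j\<in>J. c j *\<^sub>R grad (\<phi> j) xb)"
  proof (rule ccontr)
    assume nc: "\<not> ?thesis"
    obtain d where d: "d \<bullet> (- grad f xb) < 0" "\<forall>j\<in>J. d \<bullet> grad (\<phi> j) xb \<ge> 0"
      "\<forall>j\<in>Eq. d \<bullet> grad (\<phi> j) xb = 0"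
      using farkas[OF finJ EJ nc] by blast
    have "grad f xb \<bullet> (- d) \<ge> 0"
    proof (rule first_order)
      fix i assume "i \<in> Act" then show "grad (\<phi> i) xb \<bullet> - d \<le> 0"
        using d(2) unfolding J_def by (auto simp: inner_commute)
    next
      fix i assume "i \<in> Eq" then show "grad (\<phi> i) xb \<bullet> - d = 0"
        using d(3) by (auto simp: inner_commute)
    qed
    then show False using d(1) by (simp add: inner_commute)
  qed
  then obtain c where c: "\<forall>j\<in>J-Eq. c j \<ge> 0" "- grad f xb = (\<Sum>j\<in>J. c j *\<^sub>R grad (\<phi> j) xb)"
    by blast
  define y where "y i = (if i \<in> J then c i else 0)" for i
  have Jm: "J \<subseteq> {1..m}" unfolding J_def using AE_sub .
  have sum_eq: "(\<Sum>i=1..m. y i *\<^sub>R grad (\<phi> i) xb) = (\<Sum>j\<in>J. c j *\<^sub>R grad (\<phi> j) xb)"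
    by (rule sum.mono_neutral_cong_right) (use Jm in \<open>auto simp: y_def\<close>)
  have zero_phi: "\<phi> i xb = 0" if "i \<in> J" for i
    using that feas_eq unfolding J_def by (auto simp: active_set_def)
  have "y \<in> lagrange_multipliers s m f \<phi> xb"
    unfolding lagrange_multipliers_def
  proof (intro CollectI conjI allI impI ballI)
    fix i assume "i \<notin> {1..m}" then show "y i = 0" using Jm by (auto simp: y_def)
  next
    fix i assume i: "i \<in> {1..s}"
    show "0 \<le> y i"
    proof (cases "i \<in> J")
      case True
      then have "i \<in> J - Eq" using i by auto
      then show ?thesis using c(1) True by (simp add: y_def)
    qed (simp add: y_def)
  next
    show "grad f xb + (\<Sum>i=1..m. y i *\<^sub>R grad (\<phi> i) xb) = 0"
      unfolding sum_eq c(2)[symmetric] by simp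
  next
    show "(\<Sum>i=1..m. y i * \<phi> i xb) = 0"
      by (rule sum.neutral) (auto simp: y_def zero_phi)
  qed
  then show ?thesis by blast
qed

lemma CS:
  assumes y: "y \<in> lagrange_multipliers s m f \<phi> xb" and i: "i \<in> {1..s}"
  shows "y i * \<phi> i xb = 0"
proof -
  have y1: "\<forall>i\<in>{1..s}. y i \<ge> 0" and y2: "(\<Sum>i=1..m. y i * \<phi> i xb) = 0"
    using y unfolding lagrange_multipliers_def by auto
  have nn: "0 \<le> - (y j * \<phi> j xb)" if "j \<in> {1..m}" for j
  proof (cases "j \<le> s")
    case True
    then have "j \<in> {1..s}" using that by auto
    then show ?thesis using y1 feas_ineq by (simp add: mult_nonneg_nonpos)
  next
    case False
    then have "j \<in> Eq" using that by auto
    then show ?thesis using feas_eq by simp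
  qed
  have "(\<Sum>j=1..m. - (y j * \<phi> j xb)) = 0" using y2 by (simp add: sum_negf)
  then have "\<forall>j\<in>{1..m}. - (y j * \<phi> j xb) = 0"
    using sum_nonneg_eq_0_iff[of "{1..m}" "\<lambda>j. - (y j * \<phi> j xb)"] nn by simp
  then show ?thesis using i sm by auto
qed

lemma LM_zero_inactive:
  assumes y: "y \<in> lagrange_multipliers s m f \<phi> xb" and i: "i \<in> {1..m}" "i \<notin> Act \<union> Eq"
  shows "y i = 0"
proof -
  have "i \<in> {1..s}" using i by auto
  moreover then have "\<phi> i xb \<noteq> 0" using i by (auto simp: active_set_def)
  ultimately show ?thesis using CS[OF y] by auto
qed

lemma LM_outside: "y \<in> lagrange_multipliers s m f \<phi> xb \<Longrightarrow> i \<notin> {1..m} \<Longrightarrow> y i = 0"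
  unfolding lagrange_multipliers_def by auto

lemma LM_grad: "y \<in> lagrange_multipliers s m f \<phi> xb \<Longrightarrow>
    grad f xb + (\<Sum>i\<in>Act \<union> Eq. y i *\<^sub>R grad (\<phi> i) xb) = 0"
proof -
  assume y: "y \<in> lagrange_multipliers s m f \<phi> xb"
  have "(\<Sum>i=1..m. y i *\<^sub>R grad (\<phi> i) xb) = (\<Sum>i\<in>Act \<union> Eq. y i *\<^sub>R grad (\<phi> i) xb)"
    by (rule sum.mono_neutral_cong_right) (use AE_sub LM_zero_inactive[OF y] in auto)
  then show ?thesis using y unfolding lagrange_multipliers_def by auto
qed

lemma LICQ_unique:
  assumes L: "LICQ s m \<phi> xb" and y: "y \<in> lagrange_multipliers s m f \<phi> xb"
    and y': "y' \<in> lagrange_multipliers s m f \<phi> xb"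
  shows "y = y'"
proof
  fix i
  have L': "\<forall>c. (\<Sum>i\<in>Act \<union> Eq. c i *\<^sub>R grad (\<phi> i) xb) = 0 \<longrightarrow> (\<forall>i\<in>Act \<union> Eq. c i = 0)"
    using L unfolding LICQ_def Let_def by simp
  have "(\<Sum>i\<in>Act \<union> Eq. (y i - y' i) *\<^sub>R grad (\<phi> i) xb) = 0"
    using LM_grad[OF y] LM_grad[OF y'] by (simp add: scaleR_diff_left sum_subtractf) (metis add_left_cancel)
  then have c0: "\<forall>i\<in>Act \<union> Eq. y i - y' i = 0" using L'[rule_format, of "\<lambda>i. y i - y' i"] by simp
  show "y i = y' i"
  proof (cases "i \<in> {1..m}")
    case True
    then show ?thesis using c0 LM_zero_inactive[OF y] LM_zero_inactive[OF y'] by (cases "i \<in> Act \<union> Eq") auto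
  next
    case False
    then show ?thesis using LM_outside[OF y] LM_outside[OF y'] by auto
  qed
qed

end


context prob begin

lemma unique_ind:
  assumes yb: "lagrange_multipliers s m f \<phi> xb = {yb}"
    and cs: "(\<Sum>i\<in>Act \<union> Eq. c i *\<^sub>R grad (\<phi> i) xb) = 0"
    and cn: "\<And>i. i \<in> Act \<Longrightarrow> yb i \<le> 0 \<Longrightarrow> c i \<ge> 0"
  shows "\<forall>i\<in>Act \<union> Eq. c i = 0"
proof -
  have ybL: "yb \<in> lagrange_multipliers s m f \<phi> xb" using yb by simp
  have ev1: "eventually (\<lambda>\<theta>. yb i > 0 \<longrightarrow> yb i + \<theta> * c i \<ge> 0) (at_right 0)" for i
  proof (cases "yb i > 0")
    case True
    have "((\<lambda>\<theta>. yb i + \<theta> * c i) \<longlongrightarrow> yb i + 0 * c i) (at_right 0)"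
      by (intro tendsto_intros)
    then have "eventually (\<lambda>\<theta>. yb i + \<theta> * c i > 0) (at_right 0)"
      using True by (intro order_tendstoD) auto
    then show ?thesis by (rule eventually_mono) auto
  qed simp
  have "eventually (\<lambda>\<theta>. \<forall>i\<in>Act. yb i > 0 \<longrightarrow> yb i + \<theta> * c i \<ge> 0) (at_right 0)"
    using ev1 fin_Act by (intro eventually_ball_finite) auto
  then obtain \<theta> where th: "\<theta> > 0" "\<And>i. i \<in> Act \<Longrightarrow> yb i > 0 \<Longrightarrow> yb i + \<theta> * c i \<ge> 0"
    using ev_pick by blast
  define c' where "c' i = (if i \<in> Act \<union> Eq then c i else 0)" for i
  define y' where "y' i = yb i + \<theta> * c' i" for i
  have sumc: "(\<Sum>i=1..m. c' i *\<^sub>R grad (\<phi> i) xb) = 0"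
  proof -
    have "(\<Sum>i=1..m. c' i *\<^sub>R grad (\<phi> i) xb) = (\<Sum>i\<in>Act \<union> Eq. c i *\<^sub>R grad (\<phi> i) xb)"
      by (rule sum.mono_neutral_cong_right) (use AE_sub in \<open>auto simp: c'_def\<close>)
    then show ?thesis using cs by simp
  qed
  have sumphi: "(\<Sum>i=1..m. c' i * \<phi> i xb) = 0"
    by (rule sum.neutral) (auto simp: c'_def feas_eq active_set_def)
  have "y' \<in> lagrange_multipliers s m f \<phi> xb"
    unfolding lagrange_multipliers_def
  proof (intro CollectI conjI allI impI ballI)
    fix i assume "i \<notin> {1..m}" then show "y' i = 0"
      using LM_outside[OF ybL] AE_sub by (auto simp: y'_def c'_def)
  next
    fix i assume i: "i \<in> {1..s}"
    have yb0: "yb i \<ge> 0" using ybL i unfolding lagrange_multipliers_def by auto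
    show "0 \<le> y' i"
    proof (cases "i \<in> Act")
      case True
      show ?thesis
      proof (cases "yb i > 0")
        case True then show ?thesis using th(2) \<open>i \<in> Act\<close> by (simp add: y'_def c'_def)
      next
        case False then have "c i \<ge> 0" using cn \<open>i \<in> Act\<close> by simp
        then show ?thesis using yb0 th(1) \<open>i \<in> Act\<close> by (simp add: y'_def c'_def)
      qed
    next
      case False then have "i \<notin> Act \<union> Eq" using i by auto
      then have "c' i = 0" unfolding c'_def by (rule if_not_P)
      then show ?thesis using yb0 by (simp add: y'_def)
    qed
  next
    have "grad f xb + (\<Sum>i=1..m. y' i *\<^sub>R grad (\<phi> i) xb)
        = (grad f xb + (\<Sum>i=1..m. yb i *\<^sub>R grad (\<phi> i) xb)) + \<theta> *\<^sub>R (\<Sum>i=1..m. c' i *\<^sub>R grad (\<phi> i) xb)"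
      by (simp add: y'_def scaleR_add_left sum.distrib scaleR_sum_right)
    then show "grad f xb + (\<Sum>i=1..m. y' i *\<^sub>R grad (\<phi> i) xb) = 0"
      using ybL sumc unfolding lagrange_multipliers_def by simp
  next
    have "(\<Sum>i=1..m. y' i * \<phi> i xb) = (\<Sum>i=1..m. yb i * \<phi> i xb) + \<theta> * (\<Sum>i=1..m. c' i * \<phi> i xb)"
      by (simp add: y'_def distrib_right sum.distrib sum_distrib_left mult.assoc)
    then show "(\<Sum>i=1..m. y' i * \<phi> i xb) = 0"
      using ybL sumphi unfolding lagrange_multipliers_def by simp
  qed
  then have "y' = yb" using yb by simp
  then have "\<theta> * c' i = 0" for i unfolding y'_def by (metis add_cancel_left_right)
  show ?thesis
  proof
    fix i assume "i \<in> Act \<union> Eq"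
    then have "c' i = c i" unfolding c'_def by (rule if_P)
    then show "c i = 0" using \<open>\<theta> * c' i = 0\<close> th(1) by simp
  qed
qed

lemma lin_sys:
  assumes yb: "lagrange_multipliers s m f \<phi> xb = {yb}"
  shows "\<exists>u. (\<forall>i\<in>Eq \<union> {i\<in>Act. yb i > 0}. grad (\<phi> i) xb \<bullet> u = - (D i w \<bullet> w) / 2)
           \<and> (\<forall>i\<in>Act. grad (\<phi> i) xb \<bullet> u \<le> - (D i w \<bullet> w) / 2)"
proof -
  define J where "J = insert 0 (Act \<union> Eq)"
  define E where "E = Eq \<union> {i\<in>Act. yb i > 0}"
  define g where "g j = (if j = 0 then (0::'a, 1::real) else (grad (\<phi> j) xb, - (D j w \<bullet> w) / 2))" for j
  have n0: "0 \<notin> Act \<union> Eq" by (auto simp: active_set_def)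
  have finAE: "finite (Act \<union> Eq)" using fin_Act by simp
  have finJ: "finite J" using finAE by (simp add: J_def)
  have EJ: "E \<subseteq> J" by (auto simp: E_def J_def)
  have nc: "\<not> (\<exists>c. (\<forall>j\<in>J-E. c j \<ge> 0) \<and> (0::'a, -1::real) = (\<Sum>j\<in>J. c j *\<^sub>R g j))"
  proof
    assume "\<exists>c. (\<forall>j\<in>J-E. c j \<ge> 0) \<and> (0::'a, -1::real) = (\<Sum>j\<in>J. c j *\<^sub>R g j)"
    then obtain c where c: "\<forall>j\<in>J-E. c j \<ge> 0" "(0::'a, -1::real) = (\<Sum>j\<in>J. c j *\<^sub>R g j)" by blast
    have split: "(\<Sum>j\<in>J. c j *\<^sub>R g j) = c 0 *\<^sub>R g 0 + (\<Sum>j\<in>Act \<union> Eq. c j *\<^sub>R g j)"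
      unfolding J_def using finAE n0 by (simp add: sum.insert)
    have gj: "g j = (grad (\<phi> j) xb, - (D j w \<bullet> w) / 2)" if "j \<in> Act \<union> Eq" for j
      using that n0 by (auto simp: g_def)
    have fsteq: "(\<Sum>j\<in>Act \<union> Eq. c j *\<^sub>R grad (\<phi> j) xb) = 0"
    proof -
      have "fst (\<Sum>j\<in>J. c j *\<^sub>R g j) = 0" using c(2) by (metis fst_conv)
      moreover have "(\<Sum>j\<in>Act \<union> Eq. fst (c j *\<^sub>R g j)) = (\<Sum>j\<in>Act \<union> Eq. c j *\<^sub>R grad (\<phi> j) xb)"
        by (rule sum.cong) (auto simp: gj)
      moreover have g0: "fst (g 0) = 0" by (simp add: g_def)
      ultimately show ?thesis unfolding split by (simp add: fst_sum g0)
    qed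
    have "\<forall>i\<in>Act \<union> Eq. c i = 0"
    proof (rule unique_ind[OF yb fsteq])
      fix i assume "i \<in> Act" "yb i \<le> 0"
      then have "i \<in> J - E" by (auto simp: J_def E_def active_set_def)
      then show "c i \<ge> 0" using c(1) by blast
    qed
    then have "(\<Sum>j\<in>Act \<union> Eq. c j *\<^sub>R g j) = 0" by simp
    then have "(0::'a, -1::real) = c 0 *\<^sub>R g 0" using c(2) split by simp
    then have "c 0 = -1" by (simp add: g_def)
    moreover have "0 \<in> J - E" by (auto simp: J_def E_def active_set_def)
    moreover have "c 0 \<ge> 0" using c(1) \<open>0 \<in> J - E\<close> by blast
    ultimately show False by simp
  qed
  obtain p where p: "p \<bullet> (0::'a, -1::real) < 0" "\<forall>j\<in>J. p \<bullet> g j \<ge> 0" "\<forall>j\<in>E. p \<bullet> g j = 0"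
    using farkas[OF finJ EJ nc] by blast
  obtain d \<delta> where pd: "p = (d, \<delta>)" by (cases p)
  have \<delta>: "\<delta> > 0" using p(1) pd by simp
  define u where "u = (- 1 / \<delta>) *\<^sub>R d"
  have gu: "grad (\<phi> j) xb \<bullet> u = - (d \<bullet> grad (\<phi> j) xb) / \<delta>" for j
    by (simp add: u_def inner_commute)
  have ineq: "grad (\<phi> j) xb \<bullet> u \<le> - (D j w \<bullet> w) / 2" if "j \<in> Act" for j
  proof -
    have "j \<in> J" "j \<noteq> 0" using that by (auto simp: J_def active_set_def)
    then have "d \<bullet> grad (\<phi> j) xb + \<delta> * (- (D j w \<bullet> w) / 2) \<ge> 0" using p(2) pd by (auto simp: g_def)
    then show ?thesis unfolding gu using \<delta> by (simp add: field_simps)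
  qed
  have eq: "grad (\<phi> j) xb \<bullet> u = - (D j w \<bullet> w) / 2" if "j \<in> E" for j
  proof -
    have "j \<noteq> 0" using that by (auto simp: E_def active_set_def)
    then have "d \<bullet> grad (\<phi> j) xb + \<delta> * (- (D j w \<bullet> w) / 2) = 0" using p(3) that pd by (auto simp: g_def)
    then show ?thesis unfolding gu using \<delta> by (simp add: field_simps)
  qed
  show ?thesis using ineq eq unfolding E_def by blast
qed

end


locale so2 = prob +
  fixes yb :: "nat \<Rightarrow> real" and w z :: 'a
  assumes ybU: "lagrange_multipliers s m f \<phi> xb = {yb}"
    and wC: "w \<in> critical_cone s m \<phi> xb yb"
    and zS: "z \<in> second_subdiff f xb w"
begin

definition gL where "gL x = grad f x + (\<Sum>i\<in>Act \<union> Eq. yb i *\<^sub>R grad (\<phi> i) x)"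
definition Lg where "Lg x = f x + (\<Sum>i\<in>Act \<union> Eq. yb i * \<phi> i x)"
definition HD where "HD = (\<Sum>i\<in>Act \<union> Eq. yb i * (D i w \<bullet> w))"

lemma ybL: "yb \<in> lagrange_multipliers s m f \<phi> xb" using ybU by simp

lemma w_act: "i \<in> Act \<Longrightarrow> grad (\<phi> i) xb \<bullet> w \<ge> 0"
  and w_eq: "i \<in> Eq \<Longrightarrow> grad (\<phi> i) xb \<bullet> w = 0"
  and w_pos: "i \<in> Act \<Longrightarrow> yb i > 0 \<Longrightarrow> grad (\<phi> i) xb \<bullet> w = 0"
  using wC unfolding critical_cone_def Let_def by auto

lemma yb_cases: "i \<in> Act \<union> Eq \<Longrightarrow> yb i \<noteq> 0 \<Longrightarrow> i \<in> Eq \<or> (i \<in> Act \<and> yb i > 0)"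
proof -
  assume i: "i \<in> Act \<union> Eq" "yb i \<noteq> 0"
  show ?thesis
  proof (cases "i \<in> Act")
    case True
    then have "i \<in> {1..s}" using Act_sub by auto
    then have "yb i \<ge> 0" using ybL unfolding lagrange_multipliers_def by auto
    then show ?thesis using i True by auto
  qed (use i in auto)
qed

lemma fin_AE: "finite (Act \<union> Eq)" using fin_Act by simp

lemma AE_m: "i \<in> Act \<union> Eq \<Longrightarrow> i \<in> {1..m}" using AE_sub by auto

lemma gL_xb: "gL xb = 0" unfolding gL_def using LM_grad[OF ybL] .

lemma Lg_xb: "Lg xb = f xb"
proof -
  have "(\<Sum>i\<in>Act \<union> Eq. yb i * \<phi> i xb) = 0"
    by (rule sum.neutral) (auto simp: feas_eq active_set_def)
  then show ?thesis by (simp add: Lg_def)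
qed

lemma Lg_deriv: "x \<in> ball xb r \<Longrightarrow> (Lg has_derivative (\<lambda>h. gL x \<bullet> h)) (at x)"
proof -
  assume x: "x \<in> ball xb r"
  have "((\<lambda>x. f x + (\<Sum>i\<in>Act \<union> Eq. yb i * \<phi> i x)) has_derivative
      (\<lambda>h. grad f x \<bullet> h + (\<Sum>i\<in>Act \<union> Eq. yb i * (grad (\<phi> i) x \<bullet> h)))) (at x)"
    by (intro has_derivative_add fd[OF x] has_derivative_sum has_derivative_mult_right phid[OF AE_m x])
  then show ?thesis unfolding Lg_def
    by (rule has_derivative_eq_rhs) (simp add: gL_def fun_eq_iff inner_add_left inner_sum_left)
qed

lemma hess_eq: "hess_quad (\<lambda>x. \<Sum>i=1..m. yb i * \<phi> i x) xb w = HD"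
proof -
  define \<psi> where "\<psi> x = (\<Sum>i=1..m. yb i * \<phi> i x)" for x
  have d\<psi>: "(\<psi> has_derivative (\<lambda>h. (\<Sum>i=1..m. yb i *\<^sub>R grad (\<phi> i) x) \<bullet> h)) (at x)"
    if x: "x \<in> ball xb r" for x
  proof -
    have "(\<psi> has_derivative (\<lambda>h. \<Sum>i=1..m. yb i * (grad (\<phi> i) x \<bullet> h))) (at x)"
      unfolding \<psi>_def by (intro has_derivative_sum has_derivative_mult_right phid x) auto
    then show ?thesis by (rule has_derivative_eq_rhs) (simp add: fun_eq_iff inner_sum_left)
  qed
  have fdeq: "frechet_derivative \<psi> (at u) w = (\<Sum>i=1..m. yb i *\<^sub>R grad (\<phi> i) u) \<bullet> w"
    if "u \<in> ball xb r" for u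
    using frechet_derivative_at[OF d\<psi>[OF that]] by metis
  have d2: "((\<lambda>u. (\<Sum>i=1..m. yb i *\<^sub>R grad (\<phi> i) u) \<bullet> w) has_derivative
       (\<lambda>h. (\<Sum>i=1..m. yb i *\<^sub>R D i h) \<bullet> w)) (at xb)"
    by (intro has_derivative_inner_left has_derivative_sum has_derivative_scaleR_right phiD) auto
  have d3: "((\<lambda>u. frechet_derivative \<psi> (at u) w) has_derivative
       (\<lambda>h. (\<Sum>i=1..m. yb i *\<^sub>R D i h) \<bullet> w)) (at xb)"
    by (rule has_derivative_transform_within_open[OF d2 open_ball xb_ball]) (simp add: fdeq)
  have "hess_quad \<psi> xb w = (\<Sum>i=1..m. yb i *\<^sub>R D i w) \<bullet> w"
    unfolding hess_quad_def using frechet_derivative_at[OF d3] by metis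
  also have "\<dots> = (\<Sum>i=1..m. yb i * (D i w \<bullet> w))" by (simp add: inner_sum_left)
  also have "\<dots> = HD" unfolding HD_def
    by (rule sum.mono_neutral_cong_right) (use AE_sub LM_zero_inactive[OF ybL] in auto)
  finally show ?thesis unfolding \<psi>_def .
qed

end


context so2 begin

lemma gL_cont: "e > 0 \<Longrightarrow> \<exists>\<delta>>0. \<forall>x. norm (x - xb) < \<delta> \<longrightarrow> norm (gL x) \<le> e"
proof -
  assume e: "e > 0"
  have c1: "isCont (grad f) xb"
    using continuous_within_open[OF xb_ball open_ball, THEN iffD1, OF lipschitz_on_continuous_within[OF flip xb_ball]] .
  have c2: "isCont (grad (\<phi> i)) xb" if "i \<in> Act \<union> Eq" for i
    using has_derivative_continuous[OF phiD[OF AE_m[OF that]]] .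
  have "isCont gL xb" unfolding gL_def[abs_def]
    using c1 c2 by (intro continuous_intros) auto
  then obtain \<delta> where \<delta>: "\<delta> > 0" "\<And>x. x \<noteq> xb \<Longrightarrow> norm (x - xb) < \<delta> \<Longrightarrow> norm (gL x - gL xb) < e"
    unfolding isCont_def LIM_eq using e by blast
  show ?thesis
  proof (intro exI[of _ \<delta>] conjI allI impI)
    fix x assume "norm (x - xb) < \<delta>"
    then show "norm (gL x) \<le> e" using \<delta>(2)[of x] gL_xb e by (cases "x = xb") auto
  qed (use \<delta> in auto)
qed

lemma Lg_lip:
  assumes e: "e > 0"
  shows "\<exists>\<delta>>0. \<forall>x y. norm (x - xb) < \<delta> \<longrightarrow> norm (y - xb) < \<delta> \<longrightarrow> \<bar>Lg x - Lg y\<bar> \<le> e * norm (x - y)"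
proof -
  obtain \<delta> where \<delta>: "\<delta> > 0" "\<And>x. norm (x - xb) < \<delta> \<Longrightarrow> norm (gL x) \<le> e" using gL_cont[OF e] by blast
  define \<delta>' where "\<delta>' = min \<delta> r"
  have "\<bar>Lg x - Lg y\<bar> \<le> e * norm (x - y)" if "norm (x - xb) < \<delta>'" "norm (y - xb) < \<delta>'" for x y
  proof -
    have "norm (Lg x - Lg y) \<le> e * norm (x - y)"
    proof (rule differentiable_bound[where S="ball xb \<delta>'" and f'="\<lambda>x h. gL x \<bullet> h"])
      show "convex (ball xb \<delta>')" by simp
      show "(Lg has_derivative (\<lambda>h. gL z \<bullet> h)) (at z within ball xb \<delta>')" if "z \<in> ball xb \<delta>'" for z
        using that by (intro has_derivative_at_withinI[OF Lg_deriv]) (auto simp: \<delta>'_def)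
      show "onorm (\<lambda>h. gL z \<bullet> h) \<le> e" if "z \<in> ball xb \<delta>'" for z
        using onorm_inner_le[of "gL z"] \<delta>(2)[of z] that by (auto simp: \<delta>'_def dist_norm norm_minus_commute)
    qed (use that in \<open>auto simp: dist_norm norm_minus_commute\<close>)
    then show ?thesis by simp
  qed
  moreover have "\<delta>' > 0" using \<delta> r by (simp add: \<delta>'_def)
  ultimately show ?thesis by blast
qed

lemma ev_norm: "((c::real \<Rightarrow> 'a) \<longlongrightarrow> xb) (at_right 0) \<Longrightarrow> \<delta> > 0 \<Longrightarrow> eventually (\<lambda>t. norm (c t - xb) < \<delta>) (at_right 0)"
  unfolding tendsto_iff dist_norm by blast

lemma S1:
  assumes \<eta>: "\<eta> > 0"
  shows "eventually (\<lambda>t. Lg (xb + t *\<^sub>R (- w)) \<ge> f xb + \<sigma> / 2 * t\<^sup>2 * (norm w)\<^sup>2 - \<eta> * t\<^sup>2) (at_right 0)"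
proof -
  obtain u where u1: "\<And>i. i \<in> Eq \<union> {i\<in>Act. yb i > 0} \<Longrightarrow> grad (\<phi> i) xb \<bullet> u = - (D i w \<bullet> w) / 2"
    and u2: "\<And>i. i \<in> Act \<Longrightarrow> grad (\<phi> i) xb \<bullet> u \<le> - (D i w \<bullet> w) / 2"
    using lin_sys[OF ybU, of w] by blast
  obtain \<rho> C where rho: "\<rho> > 0" and pen: "\<And>x. norm (x - xb) < \<rho> \<Longrightarrow>
      f x \<ge> f xb + \<sigma> / 2 * (norm (x - xb))\<^sup>2 - C * viol x"
    using exact_penalty by blast
  define Y where "Y = (\<Sum>i\<in>Act \<union> Eq. \<bar>yb i\<bar>)"
  have Y0: "Y \<ge> 0" unfolding Y_def by (rule sum_nonneg) auto
  define K where "K = 2 + \<bar>C\<bar> * real m + Y"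
  have K2: "K \<ge> 2" using Y0 by (simp add: K_def)
  define \<eta>1 where "\<eta>1 = \<eta> / K"
  have \<eta>1: "\<eta>1 > 0" using \<eta> K2 by (simp add: \<eta>1_def)
  have \<eta>1K: "\<eta>1 * K = \<eta>" using K2 by (simp add: \<eta>1_def)
  define c where "c t = xb + t *\<^sub>R (- w) + t\<^sup>2 *\<^sub>R u" for t :: real
  define x where "x t = xb + t *\<^sub>R (- w)" for t :: real
  have ct: "(c \<longlongrightarrow> xb) (at_right 0)" unfolding c_def by (rule tendsto_line)
  have xt: "(x \<longlongrightarrow> xb) (at_right 0)" using tendsto_line[of xb "- w" 0] unfolding x_def by simp
  have tay: "eventually (\<lambda>t. \<bar>\<phi> i (c t) - \<phi> i xb + t * (grad (\<phi> i) xb \<bullet> w)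
      - t\<^sup>2 * (grad (\<phi> i) xb \<bullet> u + D i w \<bullet> w / 2)\<bar> \<le> \<eta>1 * t\<^sup>2) (at_right 0)"
    if i: "i \<in> {1..m}" for i
  proof -
    have lin: "linear (D i)" using phiD[OF i] has_derivative_linear by blast
    have "D i (- w) \<bullet> (- w) = D i w \<bullet> w" using lin by (simp add: linear_neg)
    then show ?thesis using taylor2[OF r phid[OF i] phiD[OF i] \<eta>1, of "- w" u]
      unfolding c_def by simp
  qed
  have ev_pos: "eventually (\<lambda>t. 0 < t) (at_right (0::real))" by (rule eventually_at_right_less)
  have ev_E: "eventually (\<lambda>t. \<bar>\<phi> i (c t)\<bar> \<le> \<eta>1 * t\<^sup>2) (at_right 0)"
    if i: "i \<in> Eq \<union> {i\<in>Act. yb i > 0}" for i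
  proof -
    have i1: "i \<in> {1..m}" using i AE_sub by auto
    have z1: "\<phi> i xb = 0" using i feas_eq by (auto simp: active_set_def)
    have z2: "grad (\<phi> i) xb \<bullet> w = 0" using i w_eq w_pos by auto
    have z3: "grad (\<phi> i) xb \<bullet> u + D i w \<bullet> w / 2 = 0" using u1[OF i] by simp
    show ?thesis using tay[OF i1] by (rule eventually_mono) (simp add: z1 z2 z3)
  qed
  have ev_Act: "eventually (\<lambda>t. \<phi> i (c t) \<le> \<eta>1 * t\<^sup>2) (at_right 0)" if i: "i \<in> Act" for i
  proof -
    have i1: "i \<in> {1..m}" using i AE_sub by auto
    have z1: "\<phi> i xb = 0" using i by (auto simp: active_set_def)
    have z2: "grad (\<phi> i) xb \<bullet> w \<ge> 0" using i w_act by auto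
    have z3: "grad (\<phi> i) xb \<bullet> u + D i w \<bullet> w / 2 \<le> 0" using u2[OF i] by simp
    show ?thesis
    proof (rule eventually_mono[OF eventually_conj[OF tay[OF i1] ev_pos]])
      fix t assume h: "\<bar>\<phi> i (c t) - \<phi> i xb + t * (grad (\<phi> i) xb \<bullet> w)
          - t\<^sup>2 * (grad (\<phi> i) xb \<bullet> u + D i w \<bullet> w / 2)\<bar> \<le> \<eta>1 * t\<^sup>2 \<and> 0 < t"
      have "t * (grad (\<phi> i) xb \<bullet> w) \<ge> 0" using h z2 by simp
      moreover have "t\<^sup>2 * (grad (\<phi> i) xb \<bullet> u + D i w \<bullet> w / 2) \<le> 0"
        using z3 by (simp add: mult_nonneg_nonpos)
      ultimately show "\<phi> i (c t) \<le> \<eta>1 * t\<^sup>2" using h z1 by linarith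
    qed
  qed
  have ev_viol: "eventually (\<lambda>t. viol (c t) \<le> real m * (\<eta>1 * t\<^sup>2)) (at_right 0)"
  proof (rule viol_small[OF ct ev_Act ev_E])
    show "eventually (\<lambda>t. 0 \<le> \<eta>1 * t\<^sup>2) (at_right 0)" using \<eta>1 by simp
  qed auto
  have ev_sum1: "eventually (\<lambda>t. yb i * \<phi> i (c t) \<ge> - (\<bar>yb i\<bar> * (\<eta>1 * t\<^sup>2))) (at_right 0)"
    if i: "i \<in> Act \<union> Eq" for i
  proof (cases "yb i = 0")
    case True then show ?thesis using \<eta>1 by simp
  next
    case False
    then have "i \<in> Eq \<union> {i\<in>Act. yb i > 0}" using yb_cases[OF i] by auto
    then show ?thesis
    proof (rule eventually_mono[OF ev_E])
      fix t assume h: "\<bar>\<phi> i (c t)\<bar> \<le> \<eta>1 * t\<^sup>2"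
      have "\<bar>yb i * \<phi> i (c t)\<bar> \<le> \<bar>yb i\<bar> * (\<eta>1 * t\<^sup>2)"
        unfolding abs_mult using h by (intro mult_left_mono) auto
      then show "yb i * \<phi> i (c t) \<ge> - (\<bar>yb i\<bar> * (\<eta>1 * t\<^sup>2))" by linarith
    qed
  qed
  have ev_sum: "eventually (\<lambda>t. (\<Sum>i\<in>Act \<union> Eq. yb i * \<phi> i (c t)) \<ge> - (Y * (\<eta>1 * t\<^sup>2))) (at_right 0)"
  proof -
    have ev_all: "eventually (\<lambda>t. \<forall>i\<in>Act \<union> Eq. yb i * \<phi> i (c t) \<ge> - (\<bar>yb i\<bar> * (\<eta>1 * t\<^sup>2))) (at_right 0)"
      by (rule eventually_ball_finite[OF fin_AE]) (use ev_sum1 in blast)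
    show ?thesis
    proof (rule eventually_mono[OF ev_all])
    fix t assume h: "\<forall>i\<in>Act \<union> Eq. yb i * \<phi> i (c t) \<ge> - (\<bar>yb i\<bar> * (\<eta>1 * t\<^sup>2))"
    have "(\<Sum>i\<in>Act \<union> Eq. - (\<bar>yb i\<bar> * (\<eta>1 * t\<^sup>2))) \<le> (\<Sum>i\<in>Act \<union> Eq. yb i * \<phi> i (c t))"
      using h by (intro sum_mono) auto
    moreover have "(\<Sum>i\<in>Act \<union> Eq. - (\<bar>yb i\<bar> * (\<eta>1 * t\<^sup>2))) = - (Y * (\<eta>1 * t\<^sup>2))"
      unfolding Y_def by (simp add: sum_negf sum_distrib_right)
    ultimately show "(\<Sum>i\<in>Act \<union> Eq. yb i * \<phi> i (c t)) \<ge> - (Y * (\<eta>1 * t\<^sup>2))" by simp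
  qed
  qed
  have ev_pen: "eventually (\<lambda>t. norm (c t - xb) < \<rho>) (at_right 0)" by (rule ev_norm[OF ct rho])
  define q where "q = \<sigma> * \<bar>w \<bullet> u\<bar>"
  have q0: "q \<ge> 0" using sig by (simp add: q_def)
  have ev_small: "eventually (\<lambda>t. t * q \<le> \<eta>1) (at_right 0)"
  proof -
    have "\<eta>1 / (q + 1) > 0" using \<eta>1 q0 by simp
    moreover have "t * q \<le> \<eta>1" if "0 < t" "t < \<eta>1 / (q + 1)" for t
    proof -
      have "t * q \<le> t * (q + 1)" using that by simp
      also have "\<dots> \<le> \<eta>1" using that q0 by (simp add: field_simps)
      finally show ?thesis .
    qed
    ultimately show ?thesis unfolding eventually_at_right_field by auto
  qed
  define e where "e = \<eta>1 / (norm u + 1)"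
  have e: "e > 0" using \<eta>1 by (simp add: e_def add_nonneg_pos)
  obtain \<delta> where \<delta>: "\<delta> > 0" and lip: "\<And>x y. norm (x - xb) < \<delta> \<Longrightarrow> norm (y - xb) < \<delta> \<Longrightarrow>
      \<bar>Lg x - Lg y\<bar> \<le> e * norm (x - y)" using Lg_lip[OF e] by blast
  have ev_c\<delta>: "eventually (\<lambda>t. norm (c t - xb) < \<delta>) (at_right 0)" by (rule ev_norm[OF ct \<delta>])
  have ev_x\<delta>: "eventually (\<lambda>t. norm (x t - xb) < \<delta>) (at_right 0)" by (rule ev_norm[OF xt \<delta>])
  have ev_t1: "eventually (\<lambda>t. t < 1) (at_right (0::real))"
    unfolding eventually_at_right_field by (intro exI[of _ 1]) auto
  show ?thesis
  proof (rule eventually_mono[OF eventually_conj[OF ev_pos eventually_conj[OF ev_viol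
        eventually_conj[OF ev_sum eventually_conj[OF ev_pen eventually_conj[OF ev_small
        eventually_conj[OF ev_c\<delta> eventually_conj[OF ev_x\<delta> ev_t1]]]]]]]])
    fix t assume h: "0 < t \<and> viol (c t) \<le> real m * (\<eta>1 * t\<^sup>2) \<and>
      - (Y * (\<eta>1 * t\<^sup>2)) \<le> (\<Sum>i\<in>Act \<union> Eq. yb i * \<phi> i (c t)) \<and> norm (c t - xb) < \<rho> \<and>
      t * q \<le> \<eta>1 \<and> norm (c t - xb) < \<delta> \<and> norm (x t - xb) < \<delta> \<and> t < 1"
    from h have h1: "0 < t" and h2: "viol (c t) \<le> real m * (\<eta>1 * t\<^sup>2)"
      and h3: "- (Y * (\<eta>1 * t\<^sup>2)) \<le> (\<Sum>i\<in>Act \<union> Eq. yb i * \<phi> i (c t))"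
      and h4: "norm (c t - xb) < \<rho>" and h5: "t * q \<le> \<eta>1" and h6: "norm (c t - xb) < \<delta>"
      and h7: "norm (x t - xb) < \<delta>" and h8: "t < 1" by auto
    have t: "0 < t" "t < 1" using h1 h8 by auto
    have v0: "viol (c t) \<ge> 0" unfolding viol_def by (intro add_nonneg_nonneg sum_nonneg) auto
    have cviol: "C * viol (c t) \<le> \<bar>C\<bar> * real m * (\<eta>1 * t\<^sup>2)"
    proof -
      have "C * viol (c t) \<le> \<bar>C\<bar> * viol (c t)" using v0 by (intro mult_right_mono) auto
      also have "\<dots> \<le> \<bar>C\<bar> * (real m * (\<eta>1 * t\<^sup>2))" using h2 by (intro mult_left_mono) auto
      finally show ?thesis by (simp add: mult.assoc)
    qed
    have cx: "c t - xb = t *\<^sub>R (- w) + t\<^sup>2 *\<^sub>R u" by (simp add: c_def)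
    have sq: "(norm (c t - xb))\<^sup>2 \<ge> t\<^sup>2 * (norm w)\<^sup>2 - 2 * (t * t\<^sup>2) * \<bar>w \<bullet> u\<bar>"
    proof -
      have "(norm (c t - xb))\<^sup>2 = (c t - xb) \<bullet> (c t - xb)" by (simp add: power2_norm_eq_inner)
      also have "\<dots> = t\<^sup>2 * (w \<bullet> w) - 2 * (t * t\<^sup>2) * (w \<bullet> u) + (t\<^sup>2 * t\<^sup>2) * (u \<bullet> u)"
        unfolding cx by (simp add: inner_add_left inner_add_right inner_commute[of u w] power2_eq_square algebra_simps)
      also have "\<dots> \<ge> t\<^sup>2 * (w \<bullet> w) - 2 * (t * t\<^sup>2) * \<bar>w \<bullet> u\<bar>"
      proof -
        have "(t\<^sup>2 * t\<^sup>2) * (u \<bullet> u) \<ge> 0" by simp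
        moreover have "2 * (t * t\<^sup>2) * (w \<bullet> u) \<le> 2 * (t * t\<^sup>2) * \<bar>w \<bullet> u\<bar>" using t by (intro mult_left_mono) auto
        ultimately show ?thesis by linarith
      qed
      finally show ?thesis by (simp add: power2_norm_eq_inner)
    qed
    have quad: "\<sigma> / 2 * (norm (c t - xb))\<^sup>2 \<ge> \<sigma> / 2 * t\<^sup>2 * (norm w)\<^sup>2 - \<eta>1 * t\<^sup>2"
    proof -
      have "\<sigma> / 2 * (norm (c t - xb))\<^sup>2 \<ge> \<sigma> / 2 * (t\<^sup>2 * (norm w)\<^sup>2 - 2 * (t * t\<^sup>2) * \<bar>w \<bullet> u\<bar>)"
        using sq sig by (intro mult_left_mono) auto
      moreover have "\<sigma> / 2 * (t\<^sup>2 * (norm w)\<^sup>2 - 2 * (t * t\<^sup>2) * \<bar>w \<bullet> u\<bar>)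
          = \<sigma> / 2 * t\<^sup>2 * (norm w)\<^sup>2 - t\<^sup>2 * (t * q)"
        by (simp add: q_def algebra_simps)
      moreover have "t\<^sup>2 * (t * q) \<le> t\<^sup>2 * \<eta>1" using h5 by (intro mult_left_mono) auto
      moreover have "t\<^sup>2 * \<eta>1 = \<eta>1 * t\<^sup>2" by simp
      ultimately show ?thesis by linarith
    qed
    have fct: "f (c t) \<ge> f xb + \<sigma> / 2 * t\<^sup>2 * (norm w)\<^sup>2 - \<eta>1 * t\<^sup>2 - \<bar>C\<bar> * real m * (\<eta>1 * t\<^sup>2)"
      using pen[OF h4] quad cviol by linarith
    have Lct: "Lg (c t) \<ge> f xb + \<sigma> / 2 * t\<^sup>2 * (norm w)\<^sup>2 - \<eta>1 * t\<^sup>2 - \<bar>C\<bar> * real m * (\<eta>1 * t\<^sup>2)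
        - Y * (\<eta>1 * t\<^sup>2)"
      using fct h3 unfolding Lg_def by linarith
    have "\<bar>Lg (x t) - Lg (c t)\<bar> \<le> e * norm (x t - c t)" using lip[OF h7 h6] .
    also have "norm (x t - c t) = t\<^sup>2 * norm u" by (simp add: x_def c_def)
    also have "e * (t\<^sup>2 * norm u) \<le> \<eta>1 * t\<^sup>2"
    proof -
      have "e * norm u \<le> \<eta>1"
      proof -
        have "e * norm u = \<eta>1 * (norm u / (norm u + 1))" by (simp add: e_def)
        also have "\<dots> \<le> \<eta>1 * 1"
        proof -
          have "norm u / (norm u + 1) \<le> 1"
            using norm_ge_zero[of u] by (simp add: divide_le_eq add_nonneg_pos)
          then show ?thesis using \<eta>1 by (intro mult_left_mono) auto
        qed
        finally show ?thesis by simp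
      qed
      then have "t\<^sup>2 * (e * norm u) \<le> t\<^sup>2 * \<eta>1" by (intro mult_left_mono) auto
      then show ?thesis by (simp add: algebra_simps)
    qed
    finally have "\<bar>Lg (x t) - Lg (c t)\<bar> \<le> \<eta>1 * t\<^sup>2" .
    moreover have "(\<eta>1 * K) * t\<^sup>2 = \<eta>1 * t\<^sup>2 + \<eta>1 * t\<^sup>2 + \<bar>C\<bar> * real m * (\<eta>1 * t\<^sup>2) + Y * (\<eta>1 * t\<^sup>2)"
      by (simp add: K_def algebra_simps)
    ultimately have "Lg (x t) \<ge> f xb + \<sigma> / 2 * t\<^sup>2 * (norm w)\<^sup>2 - (\<eta>1 * K) * t\<^sup>2"
      using Lct by linarith
    then show "Lg (xb + t *\<^sub>R (- w)) \<ge> f xb + \<sigma> / 2 * t\<^sup>2 * (norm w)\<^sup>2 - \<eta> * t\<^sup>2"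
      unfolding \<eta>1K x_def .
  qed
qed

end


context so2 begin

definition G where "G y = (\<Sum>i\<in>Act \<union> Eq. yb i * (grad (\<phi> i) y \<bullet> w))"

lemma gL_w: "gL y \<bullet> w = grad f y \<bullet> w + G y"
  unfolding gL_def G_def by (simp add: inner_add_left inner_sum_left)

lemma line_deriv:
  assumes "xb + t *\<^sub>R (- w) \<in> ball xb r"
  shows "((\<lambda>t. Lg (xb + t *\<^sub>R (- w))) has_real_derivative gL (xb + t *\<^sub>R (- w)) \<bullet> (- w)) (at t)"
proof -
  have cd: "((\<lambda>t. xb + t *\<^sub>R (- w)) has_derivative (\<lambda>h. h *\<^sub>R (- w))) (at t)"
    by (auto intro!: derivative_eq_intros)
  have hc: "((Lg \<circ> (\<lambda>t. xb + t *\<^sub>R (- w))) has_derivative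
      ((\<lambda>h. gL (xb + t *\<^sub>R (- w)) \<bullet> h) \<circ> (\<lambda>h. h *\<^sub>R (- w)))) (at t)"
    by (rule diff_chain_at[OF cd Lg_deriv[OF assms]])
  show ?thesis unfolding has_field_derivative_def
    by (rule has_derivative_eq_rhs[OF hc[unfolded o_def]]) (auto simp: fun_eq_iff)
qed

lemma S2:
  assumes \<epsilon>: "\<epsilon> > 0" and Q: "eventually Q (at_right 0)"
  shows "\<exists>t>0. Q t \<and> gL (xb + t *\<^sub>R (- w)) \<bullet> w \<le> (\<epsilon> - \<sigma> * (norm w)\<^sup>2) * t"
proof (rule ccontr)
  assume nc: "\<not> ?thesis"
  define x where "x t = xb + t *\<^sub>R (- w)" for t :: real
  have xt: "(x \<longlongrightarrow> xb) (at_right 0)" using tendsto_line[of xb "- w" 0] unfolding x_def by simp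
  have ev_ball: "eventually (\<lambda>t. x t \<in> ball xb r) (at_right 0)"
    using ev_norm[OF xt r] by (rule eventually_mono) (simp add: dist_norm norm_minus_commute)
  have \<epsilon>4: "\<epsilon> / 4 > 0" using \<epsilon> by simp
  have ev: "eventually (\<lambda>t. Q t \<and> x t \<in> ball xb r \<and>
      Lg (x t) \<ge> f xb + \<sigma> / 2 * t\<^sup>2 * (norm w)\<^sup>2 - \<epsilon> / 4 * t\<^sup>2) (at_right 0)"
    using eventually_conj[OF Q eventually_conj[OF ev_ball S1[OF \<epsilon>4]]] unfolding x_def by simp
  then obtain \<tau> where \<tau>: "\<tau> > 0" and h\<tau>: "\<And>t. 0 < t \<Longrightarrow> t < \<tau> \<Longrightarrow> Q t \<and> x t \<in> ball xb r \<and>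
      Lg (x t) \<ge> f xb + \<sigma> / 2 * t\<^sup>2 * (norm w)\<^sup>2 - \<epsilon> / 4 * t\<^sup>2"
    unfolding eventually_at_right_field by auto
  define a where "a = \<sigma> * (norm w)\<^sup>2 - \<epsilon>"
  define k where "k t = Lg (x t) - a * t\<^sup>2 / 2" for t
  define t0 where "t0 = \<tau> / 2"
  have t0: "0 < t0" "t0 < \<tau>" using \<tau> by (auto simp: t0_def)
  have inball: "x t \<in> ball xb r" if "0 \<le> t" "t \<le> t0" for t
  proof (cases "t = 0")
    case True then show ?thesis using xb_ball by (simp add: x_def)
  next
    case False then show ?thesis using h\<tau>[of t] that t0 by auto
  qed
  have dk: "(k has_real_derivative (gL (x t) \<bullet> (- w) - a * t)) (at t)" if "0 \<le> t" "t \<le> t0" for t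
  proof -
    have h1: "((\<lambda>t. Lg (x t)) has_real_derivative gL (x t) \<bullet> (- w)) (at t)"
      unfolding x_def by (rule line_deriv) (use inball[OF that] in \<open>simp add: x_def\<close>)
    have h2: "((\<lambda>t. a * t\<^sup>2 / 2) has_real_derivative a * t) (at t)"
      by (auto intro!: derivative_eq_intros)
    show ?thesis unfolding k_def by (rule DERIV_diff[OF h1 h2])
  qed
  have neg: "gL (x t) \<bullet> (- w) - a * t < 0" if "0 < t" "t \<le> t0" for t
  proof -
    have "Q t" using h\<tau>[of t] that t0 by auto
    then have "\<not> gL (x t) \<bullet> w \<le> (\<epsilon> - \<sigma> * (norm w)\<^sup>2) * t" using nc that unfolding x_def by blast
    then show ?thesis by (simp add: a_def algebra_simps)
  qed
  have "continuous_on {0..t0} k"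
  proof (rule continuous_at_imp_continuous_on, rule ballI)
    fix t assume "t \<in> {0..t0}"
    then show "isCont k t" using DERIV_isCont[OF dk[of t]] by auto
  qed
  moreover have "k differentiable (at t)" if "0 < t" "t < t0" for t
    using dk[of t] that unfolding real_differentiable_def by auto
  ultimately obtain l \<xi> where xi: "0 < \<xi>" "\<xi> < t0" "DERIV k \<xi> :> l" "k t0 - k 0 = (t0 - 0) * l"
    using MVT[OF t0(1)] by blast
  have "l = gL (x \<xi>) \<bullet> (- w) - a * \<xi>" using DERIV_unique[OF xi(3) dk[of \<xi>]] xi by simp
  then have "l < 0" using neg[of \<xi>] xi by simp
  then have "t0 * l < 0" using t0 by (simp add: mult_pos_neg)
  then have "k t0 < k 0" using xi(4) by simp
  moreover have "k 0 = f xb" using Lg_xb by (simp add: k_def x_def)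
  ultimately have lt: "Lg (x t0) < f xb + a * t0\<^sup>2 / 2" by (simp add: k_def)
  have ge: "Lg (x t0) \<ge> f xb + \<sigma> / 2 * t0\<^sup>2 * (norm w)\<^sup>2 - \<epsilon> / 4 * t0\<^sup>2" using h\<tau>[OF t0] by auto
  have "a * t0\<^sup>2 / 2 = \<sigma> / 2 * t0\<^sup>2 * (norm w)\<^sup>2 - \<epsilon> / 2 * t0\<^sup>2" by (simp add: a_def field_simps)
  then have "\<epsilon> / 4 * t0\<^sup>2 > \<epsilon> / 2 * t0\<^sup>2" using lt ge by linarith
  moreover have "t0\<^sup>2 > 0" using t0 by simp
  ultimately show False using \<epsilon> by (simp add: field_simps)
qed

lemma S3:
  assumes e: "e > 0"
  shows "eventually (\<lambda>t. - t * (z \<bullet> w) - w \<bullet> (grad f (xb + t *\<^sub>R (- w)) - grad f xb) \<le> e * t) (at_right 0)"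
proof -
  define e' where "e' = e / ((1 + Lf) * (norm w + 1))"
  have Lf0: "Lf \<ge> 0" by (rule Lf_nonneg)
  have pos1: "(1 + Lf) * (norm w + 1) > 0"
    using Lf0 norm_ge_zero[of w] by (intro mult_pos_pos) linarith+
  have e': "e' > 0" using e pos1 by (simp add: e'_def)
  have nz: "1 + Lf \<noteq> 0" "norm w + 1 \<noteq> 0" using Lf0 norm_ge_zero[of w] by linarith+
  have e'eq: "e' * ((1 + Lf) * (norm w + 1)) = e" using nz by (simp add: e'_def)
  have "(z, - w) \<in> regular_normal_cone (graph_grad f) (xb, grad f xb)"
    using zS by (simp add: second_subdiff_def)
  then obtain \<delta> where \<delta>: "\<delta> > 0" and hn: "\<And>p. p \<in> graph_grad f \<Longrightarrow> dist p (xb, grad f xb) < \<delta> \<Longrightarrow>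
      (z, - w) \<bullet> (p - (xb, grad f xb)) \<le> e' * norm (p - (xb, grad f xb))"
    unfolding regular_normal_cone_def using e' by blast
  define x where "x t = xb + t *\<^sub>R (- w)" for t :: real
  have xt: "(x \<longlongrightarrow> xb) (at_right 0)" using tendsto_line[of xb "- w" 0] unfolding x_def by simp
  have ev_ball: "eventually (\<lambda>t. x t \<in> ball xb r) (at_right 0)"
    using ev_norm[OF xt r] by (rule eventually_mono) (simp add: dist_norm norm_minus_commute)
  define b where "b = \<delta> / ((1 + Lf) * (norm w + 1))"
  have b: "b > 0" using \<delta> pos1 by (simp add: b_def)
  have ev_b: "eventually (\<lambda>t. t < b) (at_right (0::real))"
    unfolding eventually_at_right_field using b by (intro exI[of _ b]) auto
  show ?thesis
  proof (rule eventually_mono[OF eventually_conj[OF eventually_at_right_less eventually_conj[OF ev_ball ev_b]]])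
    fix t :: real assume h: "0 < t \<and> x t \<in> ball xb r \<and> t < b"
    have t: "0 < t" using h by simp
    have gx: "norm (grad f (x t) - grad f xb) \<le> Lf * (t * norm w)"
    proof -
      have "dist (grad f (x t)) (grad f xb) \<le> Lf * dist (x t) xb"
        using flip h xb_ball by (simp add: lipschitz_on_def)
      then show ?thesis using t by (simp add: dist_norm x_def)
    qed
    define p where "p = (x t, grad f (x t))"
    have pg: "p \<in> graph_grad f" unfolding p_def graph_grad_def
      using fd h differentiableI by blast
    have pd: "p - (xb, grad f xb) = (t *\<^sub>R (- w), grad f (x t) - grad f xb)"
      by (simp add: p_def x_def)
    have np: "norm (p - (xb, grad f xb)) \<le> (1 + Lf) * (t * norm w)"
    proof -
      have "norm (p - (xb, grad f xb)) \<le> norm (t *\<^sub>R (- w)) + norm (grad f (x t) - grad f xb)"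
        unfolding pd by (rule norm_Pair_le)
      also have "\<dots> \<le> t * norm w + Lf * (t * norm w)" using gx t by simp
      finally show ?thesis by (simp add: algebra_simps)
    qed
    have np2: "(1 + Lf) * (t * norm w) \<le> t * ((1 + Lf) * (norm w + 1))"
      using t Lf0 by (simp add: algebra_simps)
    have "dist p (xb, grad f xb) < \<delta>"
    proof -
      have "t * ((1 + Lf) * (norm w + 1)) < b * ((1 + Lf) * (norm w + 1))"
        using h pos1 by (intro mult_strict_right_mono) auto
      also have "\<dots> = \<delta>" using nz by (simp add: b_def)
      finally show ?thesis using np np2 by (simp add: dist_norm)
    qed
    then have "(z, - w) \<bullet> (p - (xb, grad f xb)) \<le> e' * norm (p - (xb, grad f xb))" using hn pg by blast
    also have "\<dots> \<le> e' * (t * ((1 + Lf) * (norm w + 1)))"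
      using np np2 e' by (intro mult_left_mono) auto
    also have "\<dots> = (e' * ((1 + Lf) * (norm w + 1))) * t" by (simp add: algebra_simps)
    also have "\<dots> = e * t" using e'eq by simp
    finally show "- t * (z \<bullet> w) - w \<bullet> (grad f (xb + t *\<^sub>R (- w)) - grad f xb) \<le> e * t"
      unfolding pd by (simp add: x_def)
  qed
qed

lemma S4:
  assumes e: "e > 0"
  shows "eventually (\<lambda>t. \<bar>G (xb + t *\<^sub>R (- w)) - G xb + t * HD\<bar> \<le> e * t) (at_right 0)"
proof -
  define Y where "Y = (\<Sum>i\<in>Act \<union> Eq. \<bar>yb i\<bar>)"
  have Y0: "Y \<ge> 0" unfolding Y_def by (rule sum_nonneg) auto
  define e1 where "e1 = e / (Y + 1)"
  have e1: "e1 > 0" using e Y0 by (simp add: e1_def add_nonneg_pos)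
  define x where "x t = xb + t *\<^sub>R (- w)" for t :: real
  have xt: "(x \<longlongrightarrow> xb) (at_right 0)" using tendsto_line[of xb "- w" 0] unfolding x_def by simp
  have per: "eventually (\<lambda>t. \<bar>(grad (\<phi> i) (x t) - grad (\<phi> i) xb) \<bullet> w + t * (D i w \<bullet> w)\<bar> \<le> e1 * t) (at_right 0)"
    if i: "i \<in> Act \<union> Eq" for i
  proof -
    have i1: "i \<in> {1..m}" using AE_m[OF i] .
    have lin: "linear (D i)" using phiD[OF i1] has_derivative_linear by blast
    define e2 where "e2 = e1 / ((norm w)\<^sup>2 + 1)"
    have e2: "e2 > 0" using e1 by (simp add: e2_def add_nonneg_pos)
    obtain d where d: "d > 0" and hd: "\<And>y. norm (y - xb) < d \<Longrightarrow>
        norm (grad (\<phi> i) y - grad (\<phi> i) xb - D i (y - xb)) \<le> e2 * norm (y - xb)"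
      using phiD[OF i1] e2 unfolding has_derivative_at_alt by blast
    show ?thesis
    proof (rule eventually_mono[OF eventually_conj[OF eventually_at_right_less ev_norm[OF xt d]]])
      fix t :: real assume h: "0 < t \<and> norm (x t - xb) < d"
      have xd: "x t - xb = t *\<^sub>R (- w)" by (simp add: x_def)
      have Dx: "D i (x t - xb) = - (t *\<^sub>R D i w)" unfolding xd using lin by (simp add: linear_scale linear_neg)
      define \<rho> where "\<rho> = grad (\<phi> i) (x t) - grad (\<phi> i) xb - D i (x t - xb)"
      have nx: "norm (x t - xb) = t * norm w" using h unfolding xd by simp
      have nr: "norm \<rho> \<le> e2 * (t * norm w)" using hd[of "x t"] h unfolding \<rho>_def nx by simp
      have "(grad (\<phi> i) (x t) - grad (\<phi> i) xb) \<bullet> w + t * (D i w \<bullet> w) = \<rho> \<bullet> w"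
        unfolding \<rho>_def Dx by (simp add: inner_diff_left inner_add_left)
      then have "\<bar>(grad (\<phi> i) (x t) - grad (\<phi> i) xb) \<bullet> w + t * (D i w \<bullet> w)\<bar> \<le> norm \<rho> * norm w"
        using Cauchy_Schwarz_ineq2[of \<rho> w] by simp
      also have "\<dots> \<le> e2 * (t * norm w) * norm w" using nr by (intro mult_right_mono) auto
      also have "\<dots> = t * (e2 * (norm w)\<^sup>2)" by (simp add: power2_eq_square algebra_simps)
      also have "\<dots> \<le> t * e1"
      proof -
        have "e2 * (norm w)\<^sup>2 = e1 * ((norm w)\<^sup>2 / ((norm w)\<^sup>2 + 1))" by (simp add: e2_def)
        also have "\<dots> \<le> e1 * 1"
        proof -
          have "(norm w)\<^sup>2 / ((norm w)\<^sup>2 + 1) \<le> 1" by (simp add: divide_le_eq add_nonneg_pos)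
          then show ?thesis using e1 by (intro mult_left_mono) auto
        qed
        finally show ?thesis using h by (intro mult_left_mono) auto
      qed
      finally show "\<bar>(grad (\<phi> i) (x t) - grad (\<phi> i) xb) \<bullet> w + t * (D i w \<bullet> w)\<bar> \<le> e1 * t"
        by (simp add: mult.commute)
    qed
  qed
  have all: "eventually (\<lambda>t. \<forall>i\<in>Act \<union> Eq. \<bar>(grad (\<phi> i) (x t) - grad (\<phi> i) xb) \<bullet> w + t * (D i w \<bullet> w)\<bar> \<le> e1 * t) (at_right 0)"
    by (rule eventually_ball_finite[OF fin_AE]) (use per in blast)
  show ?thesis
  proof (rule eventually_mono[OF eventually_conj[OF all eventually_at_right_less]])
    fix t :: real
    assume h: "(\<forall>i\<in>Act \<union> Eq. \<bar>(grad (\<phi> i) (x t) - grad (\<phi> i) xb) \<bullet> w + t * (D i w \<bullet> w)\<bar> \<le> e1 * t) \<and> 0 < t"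
    have eq: "G (x t) - G xb + t * HD
        = (\<Sum>i\<in>Act \<union> Eq. yb i * ((grad (\<phi> i) (x t) - grad (\<phi> i) xb) \<bullet> w + t * (D i w \<bullet> w)))"
      unfolding G_def HD_def
      by (simp add: sum_subtractf[symmetric] sum_distrib_left sum.distrib[symmetric] inner_diff_left algebra_simps)
    have "\<bar>G (x t) - G xb + t * HD\<bar> \<le> (\<Sum>i\<in>Act \<union> Eq. \<bar>yb i\<bar> * (e1 * t))"
      unfolding eq
    proof (rule order_trans[OF sum_abs], rule sum_mono)
      fix i assume "i \<in> Act \<union> Eq"
      then show "\<bar>yb i * ((grad (\<phi> i) (x t) - grad (\<phi> i) xb) \<bullet> w + t * (D i w \<bullet> w))\<bar> \<le> \<bar>yb i\<bar> * (e1 * t)"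
        using h unfolding abs_mult by (intro mult_left_mono) auto
    qed
    also have "\<dots> = Y * e1 * t" unfolding Y_def by (simp add: sum_distrib_right mult.assoc)
    also have "\<dots> \<le> e * t"
    proof -
      have "Y * e1 \<le> e" using Y0 e by (simp add: e1_def field_simps)
      then show ?thesis using h by (intro mult_right_mono) auto
    qed
    finally show "\<bar>G (xb + t *\<^sub>R - w) - G xb + t * HD\<bar> \<le> e * t" by (simp add: x_def)
  qed
qed

lemma main2: "z \<bullet> w + HD \<ge> \<sigma> * (norm w)\<^sup>2"
proof -
  have "\<sigma> * (norm w)\<^sup>2 \<le> z \<bullet> w + HD + e" if e: "e > 0" for e
  proof -
    define \<epsilon> where "\<epsilon> = e / 3"
    have \<epsilon>: "\<epsilon> > 0" using e by (simp add: \<epsilon>_def)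
    obtain t where t: "t > 0"
      and a: "- t * (z \<bullet> w) - w \<bullet> (grad f (xb + t *\<^sub>R (- w)) - grad f xb) \<le> \<epsilon> * t"
      and b: "\<bar>G (xb + t *\<^sub>R (- w)) - G xb + t * HD\<bar> \<le> \<epsilon> * t"
      and c: "gL (xb + t *\<^sub>R (- w)) \<bullet> w \<le> (\<epsilon> - \<sigma> * (norm w)\<^sup>2) * t"
      using S2[OF \<epsilon> eventually_conj[OF S3[OF \<epsilon>] S4[OF \<epsilon>]]] by blast
    define X where "X = xb + t *\<^sub>R (- w)"
    have g0: "grad f xb \<bullet> w + G xb = 0" using gL_w[of xb] gL_xb by simp
    have gX: "gL X \<bullet> w = grad f X \<bullet> w + G X" by (rule gL_w)
    have "w \<bullet> (grad f X - grad f xb) = gL X \<bullet> w - (G X - G xb)"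
      using g0 gX by (simp add: inner_diff_right inner_commute)
    then have "- t * (z \<bullet> w) \<le> \<epsilon> * t + (\<epsilon> - \<sigma> * (norm w)\<^sup>2) * t + (t * HD + \<epsilon> * t)"
      using a b c unfolding X_def by (simp add: abs_le_iff)
    then have "t * (- (z \<bullet> w)) \<le> t * (3 * \<epsilon> - \<sigma> * (norm w)\<^sup>2 + HD)" by (simp add: algebra_simps)
    then have "- (z \<bullet> w) \<le> 3 * \<epsilon> - \<sigma> * (norm w)\<^sup>2 + HD"
      using t mult_le_cancel_left_pos[of t "- (z \<bullet> w)" "3 * \<epsilon> - \<sigma> * (norm w)\<^sup>2 + HD"] by blast
    then show ?thesis unfolding \<epsilon>_def by simp
  qed
  then show ?thesis by (rule field_le_epsilon)
qed

end


lemma so2_final: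
  assumes P: "prob f \<phi> s m xb r Lf D \<sigma>"
    and yb: "lagrange_multipliers s m f \<phi> xb = {yb}"
    and w: "w \<in> critical_cone s m \<phi> xb yb" and z: "z \<in> second_subdiff f xb w"
  shows "z \<bullet> w + hess_quad (\<lambda>x. \<Sum>i=1..m. yb i * \<phi> i x) xb w \<ge> \<sigma> * (norm w)\<^sup>2"
proof -
  interpret so2 f \<phi> s m xb r Lf D \<sigma> yb w z
    using P yb w z by (intro so2.intro so2_axioms.intro)
  show ?thesis using main2 hess_eq by simp
qed

theorem theorem9p2:
  fixes f :: "'a::euclidean_space \<Rightarrow> real"
    and \<phi> :: "nat \<Rightarrow> 'a \<Rightarrow> real"
    and s m :: nat and xb :: 'a
  assumes "s \<le> m"
    and "C11_near f xb"
    and "\<forall>i\<in>{1..m}. C2_near (\<phi> i) xb"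
    and "local_minimizer f (feasible_set s m \<phi>) xb"
    and "MSCQ s m \<phi> xb"
  shows "lagrange_multipliers s m f \<phi> xb \<noteq> {}
    \<and> (LICQ s m \<phi> xb \<longrightarrow> (\<exists>yb. lagrange_multipliers s m f \<phi> xb = {yb}))
    \<and> (\<forall>yb. lagrange_multipliers s m f \<phi> xb = {yb} \<longrightarrow>
         (\<forall>w\<in>critical_cone s m \<phi> xb yb. \<forall>z\<in>second_subdiff f xb w.
            z \<bullet> w + hess_quad (\<lambda>x. \<Sum>i=1..m. yb i * \<phi> i x) xb w \<ge> 0)
       \<and> (\<forall>\<sigma>>0. strong_local_minimizer f (feasible_set s m \<phi>) xb \<sigma> \<longrightarrow>
         (\<forall>w\<in>critical_cone s m \<phi> xb yb. \<forall>z\<in>second_subdiff f xb w.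
            z \<bullet> w + hess_quad (\<lambda>x. \<Sum>i=1..m. yb i * \<phi> i x) xb w \<ge> \<sigma> * (norm w)\<^sup>2)))"
proof -
  note sm = assms(1) and c11 = assms(2) and c2 = assms(3) and lm = assms(4) and ms = assms(5)
  obtain U Lf where U: "open U" "xb \<in> U" "\<And>x. x \<in> U \<Longrightarrow> f differentiable (at x)"
    and lip: "Lf-lipschitz_on U (grad f)"
    using c11 unfolding C11_near_def by blast
  have "\<forall>i\<in>{1..m}. \<exists>V (D2 :: 'a \<Rightarrow> ('a \<Rightarrow>\<^sub>L 'a)). open V \<and> xb \<in> V
      \<and> (\<forall>x\<in>V. \<phi> i differentiable (at x) \<and> (grad (\<phi> i) has_derivative blinfun_apply (D2 x)) (at x))"
    using c2 unfolding C2_near_def by blast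
  then obtain V DD where V: "\<And>i. i \<in> {1..m} \<Longrightarrow> open (V i) \<and> xb \<in> V i
      \<and> (\<forall>x\<in>V i. \<phi> i differentiable (at x) \<and> (grad (\<phi> i) has_derivative blinfun_apply (DD i x)) (at x))"
    by metis
  have "eventually (\<lambda>x. x \<in> U \<and> (\<forall>i\<in>{1..m}. x \<in> V i)) (nhds xb)"
  proof (rule eventually_conj)
    show "eventually (\<lambda>x. x \<in> U) (nhds xb)" by (rule eventually_nhds_in_open[OF U(1,2)])
    show "eventually (\<lambda>x. \<forall>i\<in>{1..m}. x \<in> V i) (nhds xb)"
      by (rule eventually_ball_finite) (use V in \<open>auto intro: eventually_nhds_in_open\<close>)
  qed
  then obtain r where r: "r > 0" and rb: "\<And>x. dist x xb < r \<Longrightarrow> x \<in> U \<and> (\<forall>i\<in>{1..m}. x \<in> V i)"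
    unfolding eventually_nhds_metric by blast
  have bU: "ball xb r \<subseteq> U" using rb by (auto simp: dist_commute)
  have bV: "x \<in> V i" if "x \<in> ball xb r" "i \<in> {1..m}" for x i using rb that by (auto simp: dist_commute)
  define D where "D i = blinfun_apply (DD i xb)" for i
  have P: "prob f \<phi> s m xb r Lf D \<sigma>"
    if q: "\<exists>\<epsilon>>0. \<forall>x\<in>feasible_set s m \<phi>. dist x xb < \<epsilon> \<longrightarrow> f x \<ge> f xb + \<sigma> / 2 * (norm (x - xb))\<^sup>2"
      and sg: "\<sigma> \<ge> 0" for \<sigma>
  proof (unfold_locales)
    show "s \<le> m" by (rule sm)
    show "r > 0" by (rule r)
    show "(f has_derivative (\<lambda>h. grad f x \<bullet> h)) (at x)" if "x \<in> ball xb r" for x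
      using U(3) bU that by (intro grad_works) auto
    show "Lf-lipschitz_on (ball xb r) (grad f)" using lip bU by (rule lipschitz_on_subset)
    show "(\<phi> i has_derivative (\<lambda>h. grad (\<phi> i) x \<bullet> h)) (at x)" if "i \<in> {1..m}" "x \<in> ball xb r" for i x
      using V[OF that(1)] bV[OF that(2,1)] by (intro grad_works) auto
    show "(grad (\<phi> i) has_derivative D i) (at xb)" if "i \<in> {1..m}" for i
      using V[OF that] unfolding D_def by auto
    show "xb \<in> feasible_set s m \<phi>" using lm unfolding local_minimizer_def by blast
    show "\<exists>\<epsilon>>0. \<forall>x\<in>feasible_set s m \<phi>. dist x xb < \<epsilon> \<longrightarrow> f x \<ge> f xb + \<sigma> / 2 * (norm (x - xb))\<^sup>2"
      by (rule q)
    show "\<sigma> \<ge> 0" by (rule sg)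
    show "MSCQ s m \<phi> xb" by (rule ms)
  qed
  have q0: "\<exists>\<epsilon>>0. \<forall>x\<in>feasible_set s m \<phi>. dist x xb < \<epsilon> \<longrightarrow> f x \<ge> f xb + 0 / 2 * (norm (x - xb))\<^sup>2"
    using lm unfolding local_minimizer_def by (auto simp: dist_commute)
  have P0: "prob f \<phi> s m xb r Lf D 0" using P[OF q0] by simp
  have ne: "lagrange_multipliers s m f \<phi> xb \<noteq> {}" using prob.kkt_exists[OF P0] .
  have licq: "LICQ s m \<phi> xb \<longrightarrow> (\<exists>yb. lagrange_multipliers s m f \<phi> xb = {yb})"
  proof
    assume L: "LICQ s m \<phi> xb"
    obtain y where y: "y \<in> lagrange_multipliers s m f \<phi> xb" using ne by blast
    have "lagrange_multipliers s m f \<phi> xb = {y}"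
      using prob.LICQ_unique[OF P0 L] y by blast
    then show "\<exists>yb. lagrange_multipliers s m f \<phi> xb = {yb}" by blast
  qed
  have so: "(\<forall>w\<in>critical_cone s m \<phi> xb yb. \<forall>z\<in>second_subdiff f xb w.
            z \<bullet> w + hess_quad (\<lambda>x. \<Sum>i=1..m. yb i * \<phi> i x) xb w \<ge> 0)
       \<and> (\<forall>\<sigma>>0. strong_local_minimizer f (feasible_set s m \<phi>) xb \<sigma> \<longrightarrow>
         (\<forall>w\<in>critical_cone s m \<phi> xb yb. \<forall>z\<in>second_subdiff f xb w.
            z \<bullet> w + hess_quad (\<lambda>x. \<Sum>i=1..m. yb i * \<phi> i x) xb w \<ge> \<sigma> * (norm w)\<^sup>2))"
    if yb: "lagrange_multipliers s m f \<phi> xb = {yb}" for yb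
  proof (intro conjI ballI allI impI)
    fix w z assume "w \<in> critical_cone s m \<phi> xb yb" "z \<in> second_subdiff f xb w"
    from so2_final[OF P0 yb this]
    show "z \<bullet> w + hess_quad (\<lambda>x. \<Sum>i=1..m. yb i * \<phi> i x) xb w \<ge> 0" by simp
  next
    fix \<sigma> :: real and w z assume sg: "\<sigma> > 0" and st: "strong_local_minimizer f (feasible_set s m \<phi>) xb \<sigma>"
      and wz: "w \<in> critical_cone s m \<phi> xb yb" "z \<in> second_subdiff f xb w"
    have q: "\<exists>\<epsilon>>0. \<forall>x\<in>feasible_set s m \<phi>. dist x xb < \<epsilon> \<longrightarrow> f x \<ge> f xb + \<sigma> / 2 * (norm (x - xb))\<^sup>2"
      using st unfolding strong_local_minimizer_def by blast
    show "z \<bullet> w + hess_quad (\<lambda>x. \<Sum>i=1..m. yb i * \<phi> i x) xb w \<ge> \<sigma> * (norm w)\<^sup>2"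
      using so2_final[OF P[OF q] yb wz] sg by simp
  qed
  show ?thesis using ne licq so by blast
qed


end
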